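(* Let $\Omega$ be a finite subset of $\mathbb{Z}^d\setminus\{0\}$ invariant under all symmetries of $\mathbb{Z}^d$, let $\phi:\mathbb{Z}_{\ge 0}\to[0,\infty)$ satisfy $\phi(0)=\phi(1)=0$ and $\phi(a+b)\ge\phi(a)+\phi(b)$, and let $\rho$ be a probability mass function on $\Omega$ invariant under all symmetries of $\mathbb{Z}^d$. Then the series $H(\lambda)=\sum_{n=0}^\infty H_ne^{-\lambda n}$ converges for every $\lambda>\lambda_0$, and $\sum_{n=0}^\infty H_ne^{-\lambda_0 n}=\infty$.
   Context: A walk of length $n$ is a sequence $\gamma=(\gamma(i))_{i=0}^n$ in $\mathbb{Z}^d$ with $\gamma(i)-\gamma(i-1)\in\Omega$; $\mathrm{W}_n$ is the set of such walks with $\gamma(0)=0$. With $l_v(\gamma)=\#\{k:\gamma(k)=v\}$, set $\sigma(\gamma)=\prod_{v}e^{-\phi(l_v(\gamma))}\prod_{i=1}^n\rho(\gamma(i)-\gamma(i-1))$, $Z_n=\sum_{\gamma\in\mathrm{W}_n}\sigma(\gamma)$ and $\lambda_0=\lim_n\tfrac1n\log Z_n$ (which exists). $x(v)$ is the first coordinate of $v$. A bridge of length $n$ is $\gamma\in\mathrm{W}_n$ with $x(\gamma(0))<x(\gamma(i))\le x(\gamma(n))$ for $1\le i\le n$; $H_n$ is the sum of $\sigma$ over bridges of length $n$ (with $H_0=1$). *)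

theory Defs
  imports "HOL-Analysis.Analysis" "HOL-Library.Function_Algebras"
begin

text \<open>Points of Z^d are represented as functions nat => int vanishing at all indices >= d;
  the first coordinate x(v) is v 0.\<close>

type_synonym pt = "nat \<Rightarrow> int"

definition Zd :: "nat \<Rightarrow> pt set" where
  "Zd d = {v. \<forall>i\<ge>d. v i = 0}"

text \<open>Symmetries of Z^d fixing the origin: signed coordinate permutations.\<close>
definition lattice_syms :: "nat \<Rightarrow> (pt \<Rightarrow> pt) set" where
  "lattice_syms d = {g. \<exists>p s. p permutes {..<d} \<and> (\<forall>i. s i \<in> {-1, 1::int}) \<and>
      g = (\<lambda>v i. if i < d then s i * v (p i) else 0)}"

definition xcoord :: "pt \<Rightarrow> int" where
  "xcoord v = v 0"

definition walks :: "pt set \<Rightarrow> nat \<Rightarrow> pt list set" where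
  "walks \<Omega> n = {\<gamma>. length \<gamma> = Suc n \<and> \<gamma> ! 0 = 0 \<and>
      (\<forall>i\<in>{1..n}. \<gamma> ! i - \<gamma> ! (i - 1) \<in> \<Omega>)}"

definition local_time :: "pt list \<Rightarrow> pt \<Rightarrow> nat" where
  "local_time \<gamma> v = card {k. k < length \<gamma> \<and> \<gamma> ! k = v}"

definition weight :: "(nat \<Rightarrow> real) \<Rightarrow> (pt \<Rightarrow> real) \<Rightarrow> pt list \<Rightarrow> real" where
  "weight \<phi> \<rho> \<gamma> =
     (\<Prod>v\<in>set \<gamma>. exp (- \<phi> (local_time \<gamma> v))) *
     (\<Prod>i\<in>{1..<length \<gamma>}. \<rho> (\<gamma> ! i - \<gamma> ! (i - 1)))"

definition Zpart :: "pt set \<Rightarrow> (nat \<Rightarrow> real) \<Rightarrow> (pt \<Rightarrow> real) \<Rightarrow> nat \<Rightarrow> real" where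
  "Zpart \<Omega> \<phi> \<rho> n = (\<Sum>\<gamma>\<in>walks \<Omega> n. weight \<phi> \<rho> \<gamma>)"

definition lambda0 :: "pt set \<Rightarrow> (nat \<Rightarrow> real) \<Rightarrow> (pt \<Rightarrow> real) \<Rightarrow> real" where
  "lambda0 \<Omega> \<phi> \<rho> = lim (\<lambda>n. ln (Zpart \<Omega> \<phi> \<rho> n) / real n)"

definition is_bridge :: "pt list \<Rightarrow> bool" where
  "is_bridge \<gamma> = (\<forall>i\<in>{1..<length \<gamma>}.
      xcoord (\<gamma> ! 0) < xcoord (\<gamma> ! i) \<and> xcoord (\<gamma> ! i) \<le> xcoord (\<gamma> ! (length \<gamma> - 1)))"

definition Hbridge :: "pt set \<Rightarrow> (nat \<Rightarrow> real) \<Rightarrow> (pt \<Rightarrow> real) \<Rightarrow> nat \<Rightarrow> real" where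
  "Hbridge \<Omega> \<phi> \<rho> n = (if n = 0 then 1 else
      (\<Sum>\<gamma>\<in>{\<gamma>\<in>walks \<Omega> n. is_bridge \<gamma>}. weight \<phi> \<rho> \<gamma>))"

end

theory Submission
  imports Defs
begin

definition spt :: "pt list \<Rightarrow> nat \<Rightarrow> pt" where "spt us i = sum_list (take i us)"
definition X :: "pt list \<Rightarrow> nat \<Rightarrow> int" where "X us i = spt us i 0"
definition ms :: "pt list \<Rightarrow> nat set \<Rightarrow> pt multiset" where
  "ms us A = image_mset (spt us) (mset_set A)"
definition shs :: "pt list \<Rightarrow> bool" where "shs us \<longleftrightarrow> (\<forall>i\<in>{1..length us}. X us i > 0)"
definition brg :: "pt list \<Rightarrow> bool" where
  "brg us \<longleftrightarrow> shs us \<and> (\<forall>i\<le>length us. X us i \<le> X us (length us))"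
definition wspan :: "pt list \<Rightarrow> nat" where "wspan us = nat (Max (X us ` {..length us}))"
definition refl0 :: "pt \<Rightarrow> pt" where "refl0 v = (\<lambda>i. if i = 0 then - v i else v i)"

lemma spt_0[simp]: "spt us 0 = 0" by (simp add: spt_def)
lemma X_0[simp]: "X us 0 = 0" by (simp add: X_def)

lemma spt_Suc: "i < length us \<Longrightarrow> spt us (Suc i) = spt us i + us ! i"
  by (simp add: spt_def take_Suc_conv_app_nth)

lemma spt_take: "i \<le> n \<Longrightarrow> spt (take n us) i = spt us i"
  by (simp add: spt_def min_def)

lemma spt_drop: "spt (drop k us) j = spt us (k + j) - spt us k"
proof -
  have "take (k + j) us = take k us @ take j (drop k us)"
    by (simp add: take_add)
  then show ?thesis by (simp add: spt_def)
qed

lemma spt_append: "spt (a @ b) (length a + j) = spt a (length a) + spt b j"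
  by (simp add: spt_def)

lemma spt_append1: "i \<le> length a \<Longrightarrow> spt (a @ b) i = spt a i"
  by (simp add: spt_def)

lemma spt_Cons: "spt (u # us) (Suc j) = u + spt us j"
  by (simp add: spt_def)

lemma spt_map:
  assumes "\<And>x y. g (x + y) = g x + g y" "g 0 = 0"
  shows "spt (map g us) i = g (spt us i)"
proof -
  have "sum_list (map g xs) = g (sum_list xs)" for xs
    by (induction xs) (simp_all only: list.map sum_list.Cons sum_list.Nil assms)
  then show ?thesis by (simp add: spt_def take_map)
qed

lemma refl0_add: "refl0 (x + y) = refl0 x + refl0 y"
  by (auto simp: refl0_def fun_eq_iff)
lemma refl0_0: "refl0 0 = 0" by (auto simp: refl0_def fun_eq_iff)
lemma refl0_refl0[simp]: "refl0 (refl0 v) = v" by (auto simp: refl0_def fun_eq_iff)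
lemma inj_refl0: "inj refl0" by (metis injI refl0_refl0)

lemma spt_refl0: "spt (map refl0 us) i = refl0 (spt us i)"
  by (rule spt_map) (simp_all add: refl0_add refl0_0)
lemma spt_uminus: "spt (map uminus us) i = - spt us i"
  by (rule spt_map) simp_all

lemma X_refl0: "X (map refl0 us) i = - X us i"
  by (simp add: X_def spt_refl0 refl0_def)

lemma X_drop: "X (drop k us) j = X us (k + j) - X us k"
  by (simp add: X_def spt_drop)

lemma X_take: "i \<le> n \<Longrightarrow> X (take n us) i = X us i"
  by (simp add: X_def spt_take)

lemma neg_sum: "sum_list (map uminus xs) = - (sum_list xs :: pt)"
  by (induction xs) (simp_all only: list.map sum_list.Cons sum_list.Nil minus_add_distrib minus_zero)

lemma spt_rev_neg:
  assumes "j \<le> k" "k \<le> length us"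
  shows "spt (rev (map uminus (take k us))) j = spt us (k - j) - spt us k"
proof -
  define D where "D = sum_list (drop (k - j) (take k us))"
  have "take j (rev (map uminus (take k us))) = rev (drop (k - j) (map uminus (take k us)))"
    using assms by (simp add: take_rev)
  then have A0: "spt (rev (map uminus (take k us))) j = sum_list (map uminus (drop (k - j) (take k us)))"
    by (simp add: spt_def drop_map)
  have A: "spt (rev (map uminus (take k us))) j = - D"
    unfolding A0 D_def by (rule neg_sum)
  have e1: "take (k - j) (take k us) = take (k - j) us" by simp
  have "sum_list (take k us) = sum_list (take (k - j) (take k us) @ drop (k - j) (take k us))"
    by (simp only: append_take_drop_id)
  also have "\<dots> = sum_list (take (k - j) us) + D"
    unfolding D_def by (simp only: sum_list_append e1)
  finally have B: "spt us k = spt us (k - j) + D" by (simp only: spt_def)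
  show ?thesis unfolding A B by (simp add: algebra_simps)
qed

lemma ms_union: "finite A \<Longrightarrow> finite B \<Longrightarrow> A \<inter> B = {} \<Longrightarrow> ms us (A \<union> B) = ms us A + ms us B"
  by (simp add: ms_def mset_set_Union)

lemma ms_mono: "A \<subseteq> B \<Longrightarrow> finite B \<Longrightarrow> ms us A \<subseteq># ms us B"
  by (simp add: ms_def image_mset_subseteq_mono subset_imp_msubset_mset_set)

lemma ms_reindex:
  assumes "finite A" "inj_on \<sigma> A" "\<And>i. i \<in> A \<Longrightarrow> spt vs (\<sigma> i) = T (spt us i)"
  shows "ms vs (\<sigma> ` A) = image_mset T (ms us A)"
proof -
  have "ms vs (\<sigma> ` A) = image_mset (spt vs) (image_mset \<sigma> (mset_set A))"
    using assms by (simp add: ms_def image_mset_mset_set)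
  also have "\<dots> = image_mset (\<lambda>i. spt vs (\<sigma> i)) (mset_set A)" by (simp add: image_mset.compositionality o_def)
  also have "\<dots> = image_mset (\<lambda>i. T (spt us i)) (mset_set A)"
    by (rule image_mset_cong) (use assms in simp)
  also have "\<dots> = image_mset T (ms us A)" by (simp add: ms_def image_mset.compositionality o_def)
  finally show ?thesis .
qed

lemma ms_cong: "(\<And>i. i \<in> A \<Longrightarrow> spt vs i = spt us i) \<Longrightarrow> ms vs A = ms us A"
  unfolding ms_def by (cases "finite A") (auto intro!: image_mset_cong)

lemma set_ms: "finite A \<Longrightarrow> set_mset (ms us A) = spt us ` A"
  by (simp add: ms_def)

lemma sum_inj_prod_le:
  fixes f :: "'a \<Rightarrow> real" and g1 :: "'b \<Rightarrow> real" and g2 :: "'c \<Rightarrow> real"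
  assumes "finite B" "finite C" "inj_on F A" "F ` A \<subseteq> B \<times> C"
    "\<And>a. a \<in> A \<Longrightarrow> f a \<le> g1 (fst (F a)) * g2 (snd (F a))"
    "\<And>b. b \<in> B \<Longrightarrow> 0 \<le> g1 b" "\<And>c. c \<in> C \<Longrightarrow> 0 \<le> g2 c"
  shows "sum f A \<le> sum g1 B * sum g2 C"
proof -
  let ?h = "\<lambda>p. g1 (fst p) * g2 (snd p)"
  have "finite (F ` A)" using assms(1,2,4) finite_subset by blast
  then have fA: "finite A" using assms(3) finite_imageD by blast
  have "sum f A \<le> sum (\<lambda>a. ?h (F a)) A" by (rule sum_mono) (rule assms(5))
  also have "\<dots> = sum ?h (F ` A)" using assms(3) by (simp add: sum.reindex)
  also have "\<dots> \<le> sum ?h (B \<times> C)"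
  proof (rule sum_mono2)
    show "finite (B \<times> C)" using assms(1,2) by simp
    show "F ` A \<subseteq> B \<times> C" by (rule assms(4))
    fix p assume "p \<in> B \<times> C - F ` A"
    then show "0 \<le> ?h p" using assms(6,7) by (auto intro!: mult_nonneg_nonneg)
  qed
  also have "\<dots> = sum g1 B * sum g2 C"
    by (simp add: sum_product sum.cartesian_product case_prod_beta)
  finally show ?thesis .
qed



locale wsetup =
  fixes d :: nat and \<Omega> :: "pt set" and \<phi> :: "nat \<Rightarrow> real" and \<rho> :: "pt \<Rightarrow> real"
  assumes finO: "finite \<Omega>" and subO: "\<Omega> \<subseteq> Zd d - {0}"
    and symO: "\<forall>g\<in>lattice_syms d. g ` \<Omega> \<subseteq> \<Omega>"
    and phinn: "\<forall>a. \<phi> a \<ge> 0" and phi0: "\<phi> 0 = 0" and phi1: "\<phi> 1 = 0"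
    and phisup: "\<forall>a b. \<phi> (a + b) \<ge> \<phi> a + \<phi> b"
    and rhonn: "\<forall>v\<in>\<Omega>. \<rho> v \<ge> 0" and rhosum: "(\<Sum>v\<in>\<Omega>. \<rho> v) = 1"
    and rhosym: "\<forall>g\<in>lattice_syms d. \<forall>v\<in>\<Omega>. \<rho> (g v) = \<rho> v"
begin

lemma phi_mono: "a \<le> b \<Longrightarrow> \<phi> a \<le> \<phi> b"
  using phisup phinn by (metis add.commute le_add_diff_inverse add_increasing2 le_add_same_cancel1)

lemma Onz: "\<Omega> \<noteq> {}" using rhosum by auto

lemma d_pos: "d > 0"
proof (rule ccontr)
  assume "\<not> d > 0"
  then have "Zd d = {0}" by (auto simp: Zd_def fun_eq_iff)
  then show False using subO Onz by auto
qed

lemma sym_apply: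
  assumes "p permutes {..<d}" "\<forall>i. s i \<in> {-1, 1::int}" "v \<in> \<Omega>"
  defines "g \<equiv> (\<lambda>v i. if i < d then s i * v (p i) else 0)"
  shows "g v \<in> \<Omega>" "\<rho> (g v) = \<rho> v"
proof -
  have "g \<in> lattice_syms d" unfolding lattice_syms_def g_def using assms(1,2) by blast
  then show "g v \<in> \<Omega>" "\<rho> (g v) = \<rho> v" using symO rhosym assms(3) by auto
qed

lemma refl0_O: assumes "v \<in> \<Omega>" shows "refl0 v \<in> \<Omega>" "\<rho> (refl0 v) = \<rho> v"
proof -
  define s :: "nat \<Rightarrow> int" where "s = (\<lambda>i. if i = 0 then -1 else 1)"
  have vz: "v \<in> Zd d" using assms subO by auto
  have eq: "(\<lambda>i. if i < d then s i * v (id i) else 0) = refl0 v"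
    using vz d_pos by (auto simp: fun_eq_iff s_def refl0_def Zd_def)
  have "\<forall>i. s i \<in> {-1, 1::int}" by (simp add: s_def)
  from sym_apply[OF permutes_id this assms] eq
  show "refl0 v \<in> \<Omega>" "\<rho> (refl0 v) = \<rho> v" by auto
qed

lemma neg_O: assumes "v \<in> \<Omega>" shows "- v \<in> \<Omega>" "\<rho> (- v) = \<rho> v"
proof -
  define s :: "nat \<Rightarrow> int" where "s = (\<lambda>i. -1)"
  have vz: "v \<in> Zd d" using assms subO by auto
  have eq: "(\<lambda>i. if i < d then s i * v (id i) else 0) = - v"
    using vz by (auto simp: fun_eq_iff s_def Zd_def)
  have "\<forall>i. s i \<in> {-1, 1::int}" by (simp add: s_def)
  from sym_apply[OF permutes_id this assms] eq
  show "- v \<in> \<Omega>" "\<rho> (- v) = \<rho> v" by auto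
qed

lemma rho_le1: "v \<in> \<Omega> \<Longrightarrow> \<rho> v \<le> 1"
proof -
  assume v: "v \<in> \<Omega>"
  have "\<rho> v \<le> sum \<rho> \<Omega>" by (rule member_le_sum) (use v rhonn finO in auto)
  then show ?thesis using rhosum by simp
qed

lemma pos_step: "\<exists>u\<in>\<Omega>. u 0 > 0 \<and> \<rho> u > 0"
proof -
  obtain v where v: "v \<in> \<Omega>" "\<rho> v > 0"
  proof (rule ccontr)
    assume "\<not> thesis"
    then have "\<forall>v\<in>\<Omega>. \<rho> v \<le> 0" using that by force
    then have "(\<Sum>v\<in>\<Omega>. \<rho> v) \<le> 0" by (simp add: sum_nonpos)
    then show False using rhosum by simp
  qed
  have vz: "v \<in> Zd d" "v \<noteq> 0" using v subO by auto
  then obtain i where i: "v i \<noteq> 0" by (auto simp: fun_eq_iff)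
  then have id: "i < d" using vz by (auto simp: Zd_def)
  define p where "p = Transposition.transpose 0 i"
  define s :: "nat \<Rightarrow> int" where "s = (\<lambda>j. if j = 0 then sgn (v i) else 1)"
  have pp: "p permutes {..<d}" unfolding p_def using id d_pos by (intro permutes_swap_id) auto
  have ss: "\<forall>j. s j \<in> {-1, 1::int}" using i by (auto simp: s_def sgn_if)
  define g where "g = (\<lambda>v j. if j < d then s j * v (p j) else (0::int))"
  have "g v \<in> \<Omega>" "\<rho> (g v) = \<rho> v" using sym_apply[OF pp ss v(1)] unfolding g_def by auto
  moreover have "g v 0 = \<bar>v i\<bar>" using d_pos by (simp add: g_def s_def p_def abs_sgn)
  ultimately show ?thesis using v i by (metis zero_less_abs_iff)
qed

definition VW :: "pt multiset \<Rightarrow> real" where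
  "VW M = (\<Prod>v\<in>set_mset M. exp (- \<phi> (count M v)))"

lemma VW_on: "finite U \<Longrightarrow> set_mset M \<subseteq> U \<Longrightarrow> VW M = (\<Prod>v\<in>U. exp (- \<phi> (count M v)))"
  unfolding VW_def by (rule prod.mono_neutral_left) (auto simp: phi0 not_in_iff)

lemma VW_pos: "VW M > 0" by (simp add: VW_def prod_pos)
lemma VW_le1: "VW M \<le> 1"
  unfolding VW_def by (rule prod_le_1) (use phinn in auto)

lemma VW_empty[simp]: "VW {#} = 1" by (simp add: VW_def)

lemma VW_add: "VW (M + N) \<le> VW M * VW N"
proof -
  let ?U = "set_mset M \<union> set_mset N"
  have "VW (M + N) = (\<Prod>v\<in>?U. exp (- \<phi> (count M v + count N v)))" by (simp add: VW_def)
  also have "\<dots> \<le> (\<Prod>v\<in>?U. exp (- \<phi> (count M v)) * exp (- \<phi> (count N v)))"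
  proof (rule prod_mono)
    fix v show "0 \<le> exp (- \<phi> (count M v + count N v)) \<and>
      exp (- \<phi> (count M v + count N v)) \<le> exp (- \<phi> (count M v)) * exp (- \<phi> (count N v))"
      using phisup[rule_format, of "count M v" "count N v"] by (simp add: exp_add[symmetric])
  qed
  also have "\<dots> = VW M * VW N"
    by (simp add: prod.distrib VW_on[of ?U M] VW_on[of ?U N])
  finally show ?thesis .
qed

lemma VW_add_disj: "set_mset M \<inter> set_mset N = {} \<Longrightarrow> VW (M + N) = VW M * VW N"
proof -
  assume disj: "set_mset M \<inter> set_mset N = {}"
  let ?U = "set_mset M \<union> set_mset N"
  have "VW (M + N) = (\<Prod>v\<in>?U. exp (- \<phi> (count M v + count N v)))" by (simp add: VW_def)
  also have "\<dots> = (\<Prod>v\<in>?U. exp (- \<phi> (count M v)) * exp (- \<phi> (count N v)))"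
  proof (rule prod.cong)
    fix v assume "v \<in> ?U"
    then have "count M v = 0 \<or> count N v = 0" using disj by (auto simp: count_eq_zero_iff)
    then show "exp (- \<phi> (count M v + count N v)) = exp (- \<phi> (count M v)) * exp (- \<phi> (count N v))"
      by (auto simp: phi0)
  qed simp
  also have "\<dots> = VW M * VW N"
    by (simp add: prod.distrib VW_on[of ?U M] VW_on[of ?U N])
  finally show ?thesis .
qed

lemma VW_mono: assumes "M \<subseteq># N" shows "VW N \<le> VW M"
proof -
  have sub: "set_mset M \<subseteq> set_mset N" using assms by (simp add: set_mset_mono)
  have "VW N = (\<Prod>v\<in>set_mset N. exp (- \<phi> (count N v)))" by (simp add: VW_def)
  also have "\<dots> \<le> (\<Prod>v\<in>set_mset N. exp (- \<phi> (count M v)))"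
  proof (rule prod_mono)
    fix v show "0 \<le> exp (- \<phi> (count N v)) \<and> exp (- \<phi> (count N v)) \<le> exp (- \<phi> (count M v))"
      using phi_mono[of "count M v" "count N v"] assms by (simp add: subseteq_mset_def)
  qed
  also have "\<dots> = VW M" using VW_on[of "set_mset N" M] sub by simp
  finally show ?thesis .
qed

lemma count_img_inj: "inj f \<Longrightarrow> count (image_mset f M) (f x) = count M x"
proof -
  assume "inj f"
  then have "f -` {f x} = {x}" by (auto simp: inj_def)
  then show ?thesis by (cases "x \<in># M") (auto simp: count_image_mset not_in_iff)
qed

lemma VW_image: assumes "inj f" shows "VW (image_mset f M) = VW M"
proof -
  have "VW (image_mset f M) = (\<Prod>w\<in>f ` set_mset M. exp (- \<phi> (count (image_mset f M) w)))"
    by (simp add: VW_def)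
  also have "\<dots> = (\<Prod>v\<in>set_mset M. exp (- \<phi> (count (image_mset f M) (f v))))"
    using assms by (simp add: prod.reindex inj_on_def)
  also have "\<dots> = VW M" using assms by (simp add: VW_def count_img_inj)
  finally show ?thesis .
qed

lemma VW_add_new: "v \<notin># M \<Longrightarrow> VW (add_mset v M) = VW M"
  using VW_add_disj[of "{#v#}" M] by (simp add: VW_def phi1[unfolded One_nat_def])

end


context wsetup begin

definition rp :: "pt list \<Rightarrow> real" where "rp us = prod_list (map \<rho> us)"
definition Wf where "Wf us = VW (ms us {0..length us}) * rp us"
definition W1 where "W1 us = VW (ms us {1..length us}) * rp us"
definition Wo where "Wo us = VW (ms us {1..<length us}) * rp us"
definition LS :: "nat \<Rightarrow> pt list set" where "LS M = {us. set us \<subseteq> \<Omega> \<and> length us \<le> M}"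
definition LE :: "nat \<Rightarrow> pt list set" where "LE n = {us. set us \<subseteq> \<Omega> \<and> length us = n}"
definition hh where "hh n = (\<Sum>us\<in>{us\<in>LE n. brg us}. Wf us)"
definition Zo where "Zo n = (\<Sum>us\<in>LE n. Wo us)"
definition Zf where "Zf n = (\<Sum>us\<in>LE n. Wf us)"

lemma LE_iff: "us \<in> LE n \<longleftrightarrow> set us \<subseteq> \<Omega> \<and> length us = n" by (simp add: LE_def)
lemma LS_iff: "us \<in> LS n \<longleftrightarrow> set us \<subseteq> \<Omega> \<and> length us \<le> n" by (simp add: LS_def)

lemma finite_LS: "finite (LS M)"
  unfolding LS_def by (rule finite_lists_length_le[OF finO])
lemma finite_LE: "finite (LE n)"
  by (rule finite_subset[OF _ finite_LS[of n]]) (auto simp: LE_def LS_def)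

lemma rp_append: "rp (a @ b) = rp a * rp b" by (simp add: rp_def)
lemma rp_nonneg: "set us \<subseteq> \<Omega> \<Longrightarrow> 0 \<le> rp us"
  unfolding rp_def by (induction us) (use rhonn in auto)
lemma rp_le1: "set us \<subseteq> \<Omega> \<Longrightarrow> rp us \<le> 1"
  using rp_nonneg unfolding rp_def by (induction us) (auto intro!: mult_le_one simp: rho_le1 rhonn)

lemma Wf_nonneg: "set us \<subseteq> \<Omega> \<Longrightarrow> 0 \<le> Wf us"
  by (simp add: Wf_def rp_nonneg VW_pos less_imp_le)
lemma W1_nonneg: "set us \<subseteq> \<Omega> \<Longrightarrow> 0 \<le> W1 us"
  by (simp add: W1_def rp_nonneg VW_pos less_imp_le)
lemma Wo_nonneg: "set us \<subseteq> \<Omega> \<Longrightarrow> 0 \<le> Wo us"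
  by (simp add: Wo_def rp_nonneg VW_pos less_imp_le)

lemma Wf_le_Wo: "set us \<subseteq> \<Omega> \<Longrightarrow> Wf us \<le> Wo us"
  unfolding Wf_def Wo_def
  by (intro mult_right_mono VW_mono ms_mono rp_nonneg) auto

lemma Wo_le_rp: "set us \<subseteq> \<Omega> \<Longrightarrow> Wo us \<le> rp us"
  unfolding Wo_def using VW_le1 rp_nonneg VW_pos by (simp add: mult_left_le_one_le less_imp_le)

lemma spt_ne0: "shs us \<Longrightarrow> i \<in> {1..length us} \<Longrightarrow> spt us i \<noteq> 0"
  unfolding shs_def X_def by fastforce

lemma shs_Wf: assumes "shs us" shows "Wf us = W1 us"
proof -
  have "{0..length us} = insert 0 {1..length us}" by auto
  then have "ms us {0..length us} = add_mset 0 (ms us {1..length us})"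
    by (simp add: ms_def)
  moreover have "0 \<notin># ms us {1..length us}"
    using spt_ne0[OF assms] by (auto simp: set_ms)
  ultimately show ?thesis by (simp add: Wf_def W1_def VW_add_new)
qed

lemma LE_0: "LE 0 = {[]}" by (auto simp: LE_def)

lemma sum_rp_le: "(\<Sum>us\<in>LE n. rp us) \<le> 1"
proof (induction n)
  case 0 then show ?case by (simp add: LE_0 rp_def)
next
  case (Suc n)
  have "(\<Sum>us\<in>LE (Suc n). rp us) \<le> (\<Sum>v\<in>\<Omega>. \<rho> v) * (\<Sum>us\<in>LE n. rp us)"
  proof (rule sum_inj_prod_le[where F = "\<lambda>us. (hd us, tl us)"])
    show "inj_on (\<lambda>us. (hd us, tl us)) (LE (Suc n))"
    proof (rule inj_onI)
      fix x y assume "x \<in> LE (Suc n)" "y \<in> LE (Suc n)" "(hd x, tl x) = (hd y, tl y)"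
      then show "x = y" by (cases x; cases y) (auto simp: LE_def)
    qed
    show "(\<lambda>us. (hd us, tl us)) ` LE (Suc n) \<subseteq> \<Omega> \<times> LE n"
    proof
      fix p assume "p \<in> (\<lambda>us. (hd us, tl us)) ` LE (Suc n)"
      then obtain x where "x \<in> LE (Suc n)" "p = (hd x, tl x)" by auto
      then show "p \<in> \<Omega> \<times> LE n" by (cases x) (auto simp: LE_def)
    qed
    fix a assume "a \<in> LE (Suc n)"
    then obtain v w where "a = v # w" by (cases a) (auto simp: LE_def)
    then show "rp a \<le> \<rho> (fst (hd a, tl a)) * rp (snd (hd a, tl a))" by (simp add: rp_def)
  qed (use finO finite_LE rhonn rp_nonneg in \<open>auto simp: LE_def\<close>)
  also have "\<dots> \<le> 1" using Suc rhosum by simp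
  finally show ?case .
qed

lemma LE_take_drop: "us \<in> LE (n + m) \<Longrightarrow> take n us \<in> LE n \<and> drop n us \<in> LE m"
  by (auto simp: LE_def dest: in_set_takeD in_set_dropD)

lemma Wo_split: assumes "set us \<subseteq> \<Omega>" "length us = n + m"
  shows "Wo us \<le> Wo (take n us) * Wo (drop n us)"
proof -
  let ?A1 = "{1..<n}" and ?A2 = "{n+1..<n+m}"
  let ?T = "\<lambda>p. p - spt us n"
  have "ms us (?A1 \<union> ?A2) \<subseteq># ms us {1..<n+m}" by (rule ms_mono) auto
  moreover have "ms us (?A1 \<union> ?A2) = ms us ?A1 + ms us ?A2" by (rule ms_union) auto
  ultimately have "VW (ms us {1..<n+m}) \<le> VW (ms us ?A1 + ms us ?A2)" by (metis VW_mono)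
  also have "\<dots> \<le> VW (ms us ?A1) * VW (ms us ?A2)" by (rule VW_add)
  also have "ms us ?A1 = ms (take n us) {1..<n}" by (rule ms_cong) (simp add: spt_take)
  also have "VW (ms us ?A2) = VW (image_mset ?T (ms us ?A2))"
    by (rule VW_image[symmetric]) (auto simp: inj_def)
  also have "image_mset ?T (ms us ?A2) = ms (drop n us) ((\<lambda>i. i - n) ` ?A2)"
    by (rule ms_reindex[symmetric]) (auto simp: inj_on_def spt_drop)
  also have "(\<lambda>i. i - n) ` ?A2 = {1..<m}"
  proof
    show "{1..<m} \<subseteq> (\<lambda>i. i - n) ` ?A2"
    proof
      fix j assume "j \<in> {1..<m}" then show "j \<in> (\<lambda>i. i - n) ` ?A2" by (intro image_eqI[of _ _ "j + n"]) auto
    qed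
  qed auto
  finally have V: "VW (ms us {1..<n+m}) \<le> VW (ms (take n us) {1..<n}) * VW (ms (drop n us) {1..<m})" .
  have R: "rp us = rp (take n us) * rp (drop n us)" by (metis append_take_drop_id rp_append)
  have "Wo us = VW (ms us {1..<n+m}) * rp us" using assms by (simp add: Wo_def)
  also have "\<dots> \<le> VW (ms (take n us) {1..<n}) * VW (ms (drop n us) {1..<m}) * rp us"
    by (rule mult_right_mono[OF V rp_nonneg[OF assms(1)]])
  also have "\<dots> = Wo (take n us) * Wo (drop n us)"
    using assms by (simp add: Wo_def R)
  finally show ?thesis .
qed

lemma Zo_submult: "Zo (n + m) \<le> Zo n * Zo m"
  unfolding Zo_def
proof (rule sum_inj_prod_le[where F = "\<lambda>us. (take n us, drop n us)"])
  show "inj_on (\<lambda>us. (take n us, drop n us)) (LE (n + m))"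
    by (rule inj_onI) (metis append_take_drop_id prod.inject)
  show "(\<lambda>us. (take n us, drop n us)) ` LE (n + m) \<subseteq> LE n \<times> LE m"
    using LE_take_drop by auto
  fix a assume "a \<in> LE (n + m)"
  then show "Wo a \<le> Wo (fst (take n a, drop n a)) * Wo (snd (take n a, drop n a))"
    using Wo_split by (auto simp: LE_def)
qed (auto simp: finite_LE LE_iff Wo_nonneg)

lemma Zo_0: "Zo 0 = 1" by (simp add: Zo_def LE_0 Wo_def rp_def ms_def)
lemma hh_0: "hh 0 = 1"
proof -
  have "{us \<in> LE 0. brg us} = {[]}" by (auto simp: LE_0 brg_def shs_def)
  then show ?thesis by (simp add: hh_def Wf_def rp_def ms_def VW_def phi1[unfolded One_nat_def])
qed

lemma Zo_nonneg: "0 \<le> Zo n" unfolding Zo_def by (rule sum_nonneg) (simp add: Wo_nonneg LE_iff)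
lemma hh_nonneg: "0 \<le> hh n" unfolding hh_def by (rule sum_nonneg) (simp add: Wf_nonneg LE_iff)

lemma Zo_le1: "Zo n \<le> 1"
proof -
  have "Zo n \<le> (\<Sum>us\<in>LE n. rp us)" unfolding Zo_def by (rule sum_mono) (auto simp: LE_def Wo_le_rp)
  then show ?thesis using sum_rp_le[of n] by simp
qed

lemma hh_le_Zf: "hh n \<le> Zf n"
  unfolding hh_def Zf_def by (rule sum_mono2) (auto simp: finite_LE LE_iff Wf_nonneg)
lemma Zf_le_Zo: "Zf n \<le> Zo n"
  unfolding Zf_def Zo_def by (rule sum_mono) (auto simp: LE_def Wf_le_Wo)

end


context wsetup begin

lemma X_append1: "i \<le> length a \<Longrightarrow> X (a @ b) i = X a i"
  by (simp add: X_def spt_append1)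
lemma X_append2: "X (a @ b) (length a + j) = X a (length a) + X b j"
  by (simp add: X_def spt_append)

lemma shs_X_nonneg: "shs us \<Longrightarrow> i \<le> length us \<Longrightarrow> 0 \<le> X us i"
  unfolding shs_def by (cases "i = 0") (auto simp: less_imp_le)

lemma concat_brg:
  assumes a: "brg a" and b: "brg b"
  shows "brg (a @ b)"
proof -
  let ?n = "length a" and ?m = "length b"
  have sa: "shs a" and sb: "shs b" using a b by (auto simp: brg_def)
  have Xan: "0 \<le> X a ?n" using shs_X_nonneg[OF sa] by simp
  have Xbm: "0 \<le> X b ?m" using shs_X_nonneg[OF sb] by simp
  have gen: "P i" if "i \<le> ?n \<Longrightarrow> P i" "\<And>j. i = ?n + j \<Longrightarrow> j \<le> ?m \<Longrightarrow> P i" "i \<le> ?n + ?m" for P i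
    using that by (metis le_add_diff_inverse le_diff_conv nat_le_linear add.commute)
  have "shs (a @ b)" unfolding shs_def
  proof
    fix i assume i: "i \<in> {1..length (a @ b)}"
    show "X (a @ b) i > 0"
    proof (rule gen[where i = i])
      assume "i \<le> ?n" then show ?thesis using i sa by (auto simp: shs_def X_append1)
    next
      fix j assume j: "i = ?n + j" "j \<le> ?m"
      show ?thesis
      proof (cases "j = 0")
        case True then show ?thesis using i sa j by (auto simp: shs_def X_append1)
      next
        case False
        then have "X b j > 0" using sb j by (auto simp: shs_def)
        then show ?thesis using j Xan by (simp add: X_append2)
      qed
    qed (use i in auto)
  qed
  moreover have "X (a @ b) i \<le> X (a @ b) (length (a @ b))" if i: "i \<le> length (a @ b)" for i
  proof (rule gen[where i = i])
    assume "i \<le> ?n" then show ?thesis using a Xbm X_append2[of a b ?m]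
      by (auto simp: brg_def X_append1)
  next
    fix j assume j: "i = ?n + j" "j \<le> ?m"
    then show ?thesis using b X_append2[of a b ?m] X_append2[of a b j] by (auto simp: brg_def)
  qed (use i in auto)
  ultimately show ?thesis by (simp add: brg_def)
qed

lemma concat_Wf:
  assumes a: "brg a" and b: "brg b"
  shows "Wf (a @ b) = Wf a * Wf b"
proof -
  let ?n = "length a" and ?m = "length b" and ?c = "a @ b"
  have sa: "shs a" and sb: "shs b" using a b by (auto simp: brg_def)
  let ?T = "\<lambda>p. spt a ?n + p"
  have U: "{0..?n + ?m} = {0..?n} \<union> {?n+1..?n + ?m}" by auto
  have M1: "ms ?c {0..?n} = ms a {0..?n}" by (rule ms_cong) (simp add: spt_append1)
  have I: "(\<lambda>j. ?n + j) ` {1..?m} = {?n+1..?n+?m}"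
  proof
    show "{?n+1..?n+?m} \<subseteq> (\<lambda>j. ?n + j) ` {1..?m}"
    proof
      fix k assume "k \<in> {?n+1..?n+?m}" then show "k \<in> (\<lambda>j. ?n + j) ` {1..?m}"
        by (intro image_eqI[of _ _ "k - ?n"]) auto
    qed
  qed auto
  have M2: "ms ?c {?n+1..?n+?m} = image_mset ?T (ms b {1..?m})"
    unfolding I[symmetric] by (rule ms_reindex) (auto simp: inj_on_def spt_append)
  have disj: "set_mset (ms a {0..?n}) \<inter> set_mset (ms ?c {?n+1..?n+?m}) = {}"
  proof -
    have "spt a i \<noteq> spt ?c k" if ii: "i \<le> ?n" and kk: "k \<in> {?n+1..?n+?m}" for i k
    proof
      assume eq: "spt a i = spt ?c k"
      obtain j where j: "k = ?n + j" "j \<in> {1..?m}" using kk I by (metis imageE)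
      have "X ?c k = X a ?n + X b j" using j by (simp add: X_append2)
      moreover have "X b j > 0" using sb j by (auto simp: shs_def)
      moreover have "X a i \<le> X a ?n" using a ii by (auto simp: brg_def)
      moreover have "X a i = X ?c k" using eq by (simp add: X_def)
      ultimately show False by simp
    qed
    then show ?thesis by (auto simp: set_ms)
  qed
  have "Wf ?c = VW (ms ?c {0..?n} + ms ?c {?n+1..?n+?m}) * rp ?c"
    unfolding Wf_def by (simp add: U ms_union del: One_nat_def)
  also have "\<dots> = VW (ms a {0..?n}) * VW (ms b {1..?m}) * (rp a * rp b)"
    using disj by (simp add: VW_add_disj M1 M2 VW_image inj_def rp_append del: One_nat_def)
  also have "\<dots> = Wf a * W1 b" by (simp add: Wf_def W1_def)
  also have "\<dots> = Wf a * Wf b" using shs_Wf[OF sb] by simp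
  finally show ?thesis .
qed

lemma hh_supermult: "hh n * hh m \<le> hh (n + m)"
proof -
  let ?B = "\<lambda>k. {us\<in>LE k. brg us}"
  let ?G = "\<lambda>p. fst p @ snd p"
  have fB: "finite (?B k)" for k using finite_LE by simp
  have "hh n * hh m = (\<Sum>p\<in>?B n \<times> ?B m. Wf (fst p) * Wf (snd p))"
    by (simp add: hh_def sum_product sum.cartesian_product case_prod_beta)
  also have "\<dots> = (\<Sum>p\<in>?B n \<times> ?B m. Wf (?G p))"
    by (rule sum.cong) (auto simp: concat_Wf)
  also have "\<dots> = (\<Sum>c\<in>?G ` (?B n \<times> ?B m). Wf c)"
  proof -
    have "inj_on ?G (?B n \<times> ?B m)" by (auto simp: inj_on_def LE_iff)
    from sum.reindex[OF this, of Wf] show ?thesis by (simp add: o_def)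
  qed
  also have "\<dots> \<le> (\<Sum>c\<in>?B (n + m). Wf c)"
    by (rule sum_mono2) (use fB in \<open>auto simp: LE_iff concat_brg Wf_nonneg\<close>)
  finally show ?thesis by (simp add: hh_def)
qed

lemma X_rep: "X (replicate n u) i = int (min i n) * u 0"
proof -
  have "(sum_list (replicate k u)) 0 = int k * u 0" for k
    by (induction k) (simp_all add: algebra_simps)
  then show ?thesis by (simp add: X_def spt_def)
qed

lemma hh_pos: "0 < hh n"
proof -
  obtain u where u: "u \<in> \<Omega>" "u 0 > 0" "\<rho> u > 0" using pos_step by blast
  let ?r = "replicate n u"
  have mem: "?r \<in> {us\<in>LE n. brg us}"
    using u by (auto simp: LE_iff brg_def shs_def X_rep min_def mult_right_mono)
  have p: "0 < Wf ?r" using u by (simp add: Wf_def rp_def VW_pos)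
  have fin: "finite {us\<in>LE n. brg us}" using finite_LE by simp
  have "Wf ?r \<le> hh n" unfolding hh_def
    by (rule member_le_sum[OF mem _ fin]) (auto simp: LE_iff Wf_nonneg)
  then show ?thesis using p by simp
qed

lemma hh_le1: "hh n \<le> 1"
  using hh_le_Zf[of n] Zf_le_Zo[of n] Zo_le1[of n] by simp

end


lemma span_props:
  shows "\<And>i. i \<le> length us \<Longrightarrow> X us i \<le> int (wspan us)"
    and "\<exists>i\<le>length us. X us i = int (wspan us)"
proof -
  let ?S = "X us ` {..length us}"
  have fin: "finite ?S" and ne: "?S \<noteq> {}" by auto
  have "0 \<in> ?S" by (metis X_0 atMost_iff image_eqI le0)
  then have M0: "0 \<le> Max ?S" using fin by simp
  then have eq: "int (wspan us) = Max ?S" by (simp add: wspan_def)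
  show "\<And>i. i \<le> length us \<Longrightarrow> X us i \<le> int (wspan us)" unfolding eq using fin by simp
  have "Max ?S \<in> ?S" using fin ne by (rule Max_in)
  then obtain i where "i \<in> {..length us}" "Max ?S = X us i" by (rule imageE)
  then show "\<exists>i\<le>length us. X us i = int (wspan us)" unfolding eq by auto
qed

lemma span_le: "(\<And>i. i \<le> length us \<Longrightarrow> X us i \<le> int s) \<Longrightarrow> wspan us \<le> s"
  using span_props(2)[of us] by force

lemma span_eq: "(\<And>i. i \<le> length us \<Longrightarrow> X us i \<le> int s) \<Longrightarrow> ii \<le> length us \<Longrightarrow> X us ii = int s
   \<Longrightarrow> wspan us = s"
  using span_props(1)[of ii us] span_le[of us s] by force

lemma mul4: "(w::real) \<le> b * c \<Longrightarrow> 0 \<le> p \<Longrightarrow> 0 \<le> q \<Longrightarrow> w * (p * q) \<le> b * p * (c * q)"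
proof -
  assume a: "w \<le> b * c" "0 \<le> p" "0 \<le> q"
  then have "w * (p * q) \<le> (b * c) * (p * q)" by (intro mult_right_mono) auto
  then show ?thesis by (simp add: mult_ac)
qed

context wsetup begin

lemma rp_map: "set xs \<subseteq> \<Omega> \<Longrightarrow> (\<And>v. v \<in> \<Omega> \<Longrightarrow> \<rho> (g v) = \<rho> v) \<Longrightarrow> rp (map g xs) = rp xs"
  unfolding rp_def by (induction xs) auto

lemma finite_LSP2: "finite {us. set us \<subseteq> \<Omega> \<and> length us \<le> M \<and> P us}"
  by (rule finite_subset[OF _ finite_LS[of M]]) (auto simp: LS_def)

lemma hw_split:
  assumes sh: "shs us" and sp: "wspan us = s" and s1: "1 \<le> s" and so: "set us \<subseteq> \<Omega>"
  defines "k \<equiv> Max {i. i \<le> length us \<and> X us i = int s}"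
  shows "k \<le> length us" "brg (take k us)" "wspan (take k us) = s"
    "shs (map refl0 (drop k us))" "wspan (map refl0 (drop k us)) \<le> s - 1"
    "set (take k us) \<subseteq> \<Omega>" "set (map refl0 (drop k us)) \<subseteq> \<Omega>"
    "W1 us \<le> Wf (take k us) * W1 (map refl0 (drop k us))"
    "length (take k us) + length (map refl0 (drop k us)) = length us"
proof -
  let ?n = "length us" and ?m = "int s"
  let ?I = "{i. i \<le> ?n \<and> X us i = ?m}"
  let ?b = "take k us" and ?r = "map refl0 (drop k us)"
  have finI: "finite ?I" by (rule finite_subset[of _ "{..?n}"]) auto
  have neI: "?I \<noteq> {}" using span_props(2)[of us] sp by auto
  have kI: "k \<in> ?I" unfolding k_def using finI neI by (rule Max_in)
  then show kn: "k \<le> ?n" by simp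
  have Xk: "X us k = ?m" using kI by simp
  have Xle: "X us i \<le> ?m" if "i \<le> ?n" for i using span_props(1)[OF that] sp by simp
  have Xlt: "X us i < ?m" if "k < i" "i \<le> ?n" for i
  proof -
    have "X us i \<noteq> ?m"
    proof
      assume "X us i = ?m"
      then have "i \<in> ?I" using that by simp
      then have "i \<le> k" unfolding k_def by (rule Max_ge[OF finI])
      then show False using that by simp
    qed
    then show ?thesis using Xle[OF that(2)] by simp
  qed
  have Xpos: "X us i > 0" if "1 \<le> i" "i \<le> ?n" for i using sh that by (auto simp: shs_def)
  have k1: "1 \<le> k" using Xk s1 by (cases k) auto
  have lb: "length ?b = k" using kn by simp
  have Xb: "X ?b i = X us i" if "i \<le> k" for i using that by (simp add: X_take)
  show "brg ?b" unfolding brg_def shs_def lb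
    using Xb Xpos Xle kn Xk by auto
  show "wspan ?b = s"
    by (rule span_eq[where ii = k]) (use Xb Xle kn Xk lb in auto)
  have lr: "length ?r = ?n - k" by simp
  have Xr: "X ?r j = ?m - X us (k + j)" for j by (simp add: X_refl0 X_drop Xk)
  show "shs ?r" unfolding shs_def lr
  proof
    fix j assume "j \<in> {1..?n - k}"
    then show "0 < X ?r j" using Xlt[of "k + j"] Xr[of j] by auto
  qed
  show "wspan ?r \<le> s - 1"
  proof (rule span_le)
    fix j assume j: "j \<le> length ?r"
    show "X ?r j \<le> int (s - 1)"
    proof (cases "j = 0")
      case True then show ?thesis using s1 by simp
    next
      case False then show ?thesis using Xpos[of "k + j"] Xr[of j] j k1 s1 by auto
    qed
  qed
  show "set ?b \<subseteq> \<Omega>" using so by (meson in_set_takeD subsetD subsetI)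
  show "set ?r \<subseteq> \<Omega>" using so refl0_O(1) by (auto dest: in_set_dropD)
  show "length ?b + length ?r = ?n" using kn by simp
  let ?T = "\<lambda>p. refl0 (p - spt us k)"
  have U: "{1..?n} = {1..k} \<union> {k+1..?n}" using kn k1 by auto
  have V1: "VW (ms us {1..?n}) \<le> VW (ms us {1..k}) * VW (ms us {k+1..?n})"
    unfolding U by (subst ms_union) (auto intro: VW_add)
  have M1: "ms us {1..k} = ms ?b {1..k}" by (rule ms_cong) (simp add: spt_take)
  have I: "(\<lambda>i. i - k) ` {k+1..?n} = {1..?n - k}"
  proof
    show "{1..?n - k} \<subseteq> (\<lambda>i. i - k) ` {k+1..?n}"
    proof
      fix j assume "j \<in> {1..?n - k}" then show "j \<in> (\<lambda>i. i - k) ` {k+1..?n}"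
        by (intro image_eqI[of _ _ "j + k"]) auto
    qed
  qed auto
  have M2: "ms ?r {1..?n - k} = image_mset ?T (ms us {k+1..?n})"
    unfolding I[symmetric] by (rule ms_reindex) (auto simp: inj_on_def spt_refl0 spt_drop)
  have injT: "inj ?T" by (auto simp: inj_def dest: injD[OF inj_refl0])
  have R: "rp us = rp ?b * rp ?r"
  proof -
    have "rp (drop k us) = rp ?r"
      by (rule rp_map[symmetric]) (use so refl0_O(2) in \<open>auto dest: in_set_dropD\<close>)
    then show ?thesis by (metis append_take_drop_id rp_append)
  qed
  have "W1 us = VW (ms us {1..?n}) * rp us" by (simp add: W1_def)
  also have "\<dots> \<le> VW (ms us {1..k}) * VW (ms us {k+1..?n}) * rp us"
    by (rule mult_right_mono[OF V1 rp_nonneg[OF so]])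
  also have "\<dots> = (VW (ms ?b {1..k}) * rp ?b) * (VW (ms ?r {1..?n - k}) * rp ?r)"
  proof -
    have "VW (ms ?r {1..?n - k}) = VW (ms us {k+1..?n})" by (simp only: M2 VW_image[OF injT])
    then show ?thesis unfolding M1 R by (simp only: mult_ac)
  qed
  also have "\<dots> = Wf ?b * W1 ?r"
    using shs_Wf[of ?b] \<open>brg ?b\<close> lb by (simp add: brg_def W1_def)
  finally show "W1 us \<le> Wf ?b * W1 ?r" .
qed

definition GQ :: "real \<Rightarrow> nat \<Rightarrow> nat \<Rightarrow> real" where
  "GQ z M s = (\<Sum>us\<in>{us\<in>LS M. shs us \<and> wspan us \<le> s}. W1 us * z ^ length us)"
definition GB :: "real \<Rightarrow> nat \<Rightarrow> nat \<Rightarrow> real" where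
  "GB z M s = (\<Sum>us\<in>{us\<in>LS M. brg us \<and> wspan us = s}. Wf us * z ^ length us)"

lemma finite_LSP: "finite {us\<in>LS M. P us}" using finite_LS by simp

lemma GB_nonneg: "0 \<le> z \<Longrightarrow> 0 \<le> GB z M s"
  unfolding GB_def by (rule sum_nonneg) (auto simp: LS_iff Wf_nonneg)
lemma GQ_nonneg: "0 \<le> z \<Longrightarrow> 0 \<le> GQ z M s"
  unfolding GQ_def by (rule sum_nonneg) (auto simp: LS_iff W1_nonneg)

lemma hw_step:
  assumes z: "0 \<le> z" and s1: "1 \<le> s"
  shows "(\<Sum>us\<in>{us\<in>LS M. shs us \<and> wspan us = s}. W1 us * z ^ length us) \<le> GB z M s * GQ z M (s - 1)"
  unfolding GB_def GQ_def
proof (rule sum_inj_prod_le[where F = "\<lambda>us. (take (Max {i. i \<le> length us \<and> X us i = int s}) us,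
     map refl0 (drop (Max {i. i \<le> length us \<and> X us i = int s}) us))"])
  let ?k = "\<lambda>us. Max {i. i \<le> length us \<and> X us i = int s}"
  let ?F = "\<lambda>us. (take (?k us) us, map refl0 (drop (?k us) us))"
  let ?A = "{us\<in>LS M. shs us \<and> wspan us = s}"
  show "inj_on ?F ?A"
  proof (rule inj_onI)
    fix x y assume x: "x \<in> ?A" and y: "y \<in> ?A" and eq: "?F x = ?F y"
    have kx: "?k x \<le> length x" and ky: "?k y \<le> length y"
      using hw_split(1)[of x s] hw_split(1)[of y s] x y s1 by (auto simp: LS_iff)
    have "take (?k x) x = take (?k y) y" using eq by simp
    moreover then have "?k x = ?k y" using kx ky by (metis length_take min.absorb2)
    moreover have "drop (?k x) x = drop (?k y) y"
      using eq by (simp add: map_injective[OF _ inj_refl0])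
    ultimately show "x = y" by (metis append_take_drop_id)
  qed
  show "?F ` ?A \<subseteq> {us\<in>LS M. brg us \<and> wspan us = s} \<times> {us\<in>LS M. shs us \<and> wspan us \<le> s - 1}"
  proof
    fix p assume "p \<in> ?F ` ?A"
    then obtain x where x: "x \<in> ?A" "p = ?F x" by auto
    then have xs: "shs x" "wspan x = s" "set x \<subseteq> \<Omega>" "length x \<le> M" by (auto simp: LS_iff)
    note h = hw_split[OF xs(1,2) s1 xs(3)]
    show "p \<in> {us\<in>LS M. brg us \<and> wspan us = s} \<times> {us\<in>LS M. shs us \<and> wspan us \<le> s - 1}"
      using h xs(4) x(2) by (auto simp: LS_iff)
  qed
  fix a assume "a \<in> ?A"
  then have xs: "shs a" "wspan a = s" "set a \<subseteq> \<Omega>" by (auto simp: LS_iff)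
  note h = hw_split[OF xs(1,2) s1 xs(3)]
  have e: "z ^ length a = z ^ length (fst (?F a)) * z ^ length (snd (?F a))"
    using h(9) by (simp only: power_add[symmetric] fst_conv snd_conv)
  have w: "W1 a \<le> Wf (fst (?F a)) * W1 (snd (?F a))" using h(8) by simp
  show "W1 a * z ^ length a \<le> Wf (fst (?F a)) * z ^ length (fst (?F a)) *
      (W1 (snd (?F a)) * z ^ length (snd (?F a)))"
    unfolding e by (rule mul4[OF w]) (simp_all add: z)
qed (auto simp: finite_LSP2 LS_iff Wf_nonneg W1_nonneg z)

end


context wsetup begin

lemma GQ_0: "GQ z M 0 = 1"
proof -
  have "{us\<in>LS M. shs us \<and> wspan us \<le> 0} = {[]}"
  proof
    show "{us\<in>LS M. shs us \<and> wspan us \<le> 0} \<subseteq> {[]}"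
    proof
      fix us assume us: "us \<in> {us\<in>LS M. shs us \<and> wspan us \<le> 0}"
      show "us \<in> {[]}"
      proof (rule ccontr)
        assume "us \<notin> {[]}"
        then have "1 \<le> length us" by (cases us) auto
        then have "X us 1 > 0" "X us 1 \<le> int (wspan us)" using us span_props(1)[of 1 us]
          by (auto simp: shs_def)
        then show False using us by simp
      qed
    qed
    show "{[]} \<subseteq> {us\<in>LS M. shs us \<and> wspan us \<le> 0}"
      by (auto simp: LS_iff shs_def wspan_def)
  qed
  then show ?thesis by (simp add: GQ_def W1_def rp_def ms_def)
qed

lemma GQ_Suc: assumes z: "0 \<le> z" shows "GQ z M (Suc s) \<le> (1 + GB z M (Suc s)) * GQ z M s"
proof -
  let ?h = "\<lambda>us. W1 us * z ^ length us"
  have eq: "{us\<in>LS M. shs us \<and> wspan us \<le> Suc s} =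
     {us\<in>LS M. shs us \<and> wspan us \<le> s} \<union> {us\<in>LS M. shs us \<and> wspan us = Suc s}" by auto
  have "GQ z M (Suc s) = GQ z M s + (\<Sum>us\<in>{us\<in>LS M. shs us \<and> wspan us = Suc s}. ?h us)"
    unfolding GQ_def eq by (rule sum.union_disjoint) (auto simp: finite_LSP)
  also have "\<dots> \<le> GQ z M s + GB z M (Suc s) * GQ z M s"
    using hw_step[OF z, of "Suc s" M] by simp
  finally show ?thesis by (simp add: algebra_simps)
qed

lemma GQ_prod: assumes z: "0 \<le> z" shows "GQ z M s \<le> (\<Prod>j\<in>{1..s}. 1 + GB z M j)"
proof (induction s)
  case 0 then show ?case by (simp add: GQ_0)
next
  case (Suc s)
  have "GQ z M (Suc s) \<le> (1 + GB z M (Suc s)) * GQ z M s" by (rule GQ_Suc[OF z])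
  also have "\<dots> \<le> (1 + GB z M (Suc s)) * (\<Prod>j\<in>{1..s}. 1 + GB z M j)"
    by (rule mult_left_mono[OF Suc]) (use GB_nonneg[OF z] in \<open>simp add: add_nonneg_nonneg\<close>)
  also have "\<dots> = (\<Prod>j\<in>{1..Suc s}. 1 + GB z M j)" by (simp add: prod.cl_ivl_Suc)
  finally show ?case .
qed

lemma group_len:
  fixes w :: "pt list \<Rightarrow> real" and z :: real
  shows "(\<Sum>us\<in>{us\<in>LS M. P us}. w us * z ^ length us) = (\<Sum>n\<in>{..M}. (\<Sum>us\<in>{us\<in>LE n. P us}. w us) * z ^ n)"
proof -
  let ?S = "{us\<in>LS M. P us}"
  have "(\<Sum>n\<in>{..M}. (\<Sum>us\<in>{us\<in>LE n. P us}. w us) * z ^ n) =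
        (\<Sum>n\<in>{..M}. (\<Sum>us\<in>{x\<in>?S. length x = n}. w us * z ^ length us))"
  proof (rule sum.cong)
    fix n assume n: "n \<in> {..M}"
    have e: "{x\<in>?S. length x = n} = {us\<in>LE n. P us}" using n by (auto simp: LS_iff LE_iff)
    have "(\<Sum>us\<in>{us\<in>LE n. P us}. w us * z ^ length us) = (\<Sum>us\<in>{us\<in>LE n. P us}. w us * z ^ n)"
      by (rule sum.cong) (auto simp: LE_iff)
    then show "(\<Sum>us\<in>{us\<in>LE n. P us}. w us) * z ^ n = (\<Sum>us\<in>{x\<in>?S. length x = n}. w us * z ^ length us)"
      unfolding e sum_distrib_right by simp
  qed simp
  also have "\<dots> = (\<Sum>us\<in>?S. w us * z ^ length us)"
    by (rule sum.group) (auto simp: finite_LSP2 LS_iff)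
  finally show ?thesis by simp
qed

definition Hs :: "real \<Rightarrow> nat \<Rightarrow> real" where "Hs z M = (\<Sum>n\<in>{..M}. hh n * z ^ n)"

lemma Qtot_le: assumes z: "0 \<le> z"
  shows "(\<Sum>us\<in>{us\<in>LS M. shs us}. W1 us * z ^ length us) \<le> exp (Hs z M)"
proof -
  define S0 where "S0 = Max (wspan ` {us\<in>LS M. shs us})"
  have fin: "finite (wspan ` {us\<in>LS M. shs us})" by (simp add: finite_LSP)
  have eq: "{us\<in>LS M. shs us} = {us\<in>LS M. shs us \<and> wspan us \<le> S0}"
    using Max_ge[OF fin] unfolding S0_def by auto
  have "(\<Sum>us\<in>{us\<in>LS M. shs us}. W1 us * z ^ length us) = GQ z M S0"
    by (simp add: GQ_def eq[symmetric])
  also have "\<dots> \<le> (\<Prod>j\<in>{1..S0}. 1 + GB z M j)" by (rule GQ_prod[OF z])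
  also have "\<dots> \<le> (\<Prod>j\<in>{1..S0}. exp (GB z M j))"
    by (rule prod_mono) (use GB_nonneg[OF z] exp_ge_add_one_self in \<open>auto simp: add_nonneg_nonneg add.commute\<close>)
  also have "\<dots> = exp (\<Sum>j\<in>{1..S0}. GB z M j)" by (simp add: exp_sum)
  also have "(\<Sum>j\<in>{1..S0}. GB z M j) \<le> Hs z M"
  proof -
    let ?Sb = "{b\<in>LS M. brg b \<and> wspan b \<in> {1..S0}}"
    let ?h = "\<lambda>b. Wf b * z ^ length b"
    have "(\<Sum>j\<in>{1..S0}. GB z M j) = (\<Sum>j\<in>{1..S0}. sum ?h {x\<in>?Sb. wspan x = j})"
      unfolding GB_def by (rule sum.cong) (auto intro!: sum.cong)
    also have "\<dots> = sum ?h ?Sb" by (rule sum.group) (auto simp: finite_LSP)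
    also have "\<dots> \<le> sum ?h {b\<in>LS M. brg b}"
      by (rule sum_mono2) (auto simp: finite_LSP2 LS_iff Wf_nonneg z)
    also have "\<dots> = Hs z M" unfolding Hs_def group_len hh_def by simp
    finally show ?thesis .
  qed
  then have "exp (\<Sum>j\<in>{1..S0}. GB z M j) \<le> exp (Hs z M)" by simp
  finally show ?thesis .
qed

end


context wsetup begin

lemma butlast_facts:
  assumes "a \<noteq> []" "set a \<subseteq> \<Omega>"
  shows "Wo a = W1 (butlast a) * \<rho> (last a)" "set (butlast a) \<subseteq> \<Omega>" "last a \<in> \<Omega>"
    "length a = Suc (length (butlast a))"
    "\<And>i. i \<le> length (butlast a) \<Longrightarrow> X (butlast a) i = X a i"
proof -
  let ?n = "length a"
  have bt: "butlast a = take (?n - 1) a" by (simp add: butlast_conv_take)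
  show "set (butlast a) \<subseteq> \<Omega>" using assms by (meson in_set_butlastD subset_iff)
  show "last a \<in> \<Omega>" using assms by auto
  show ln: "length a = Suc (length (butlast a))" using assms by simp
  show "\<And>i. i \<le> length (butlast a) \<Longrightarrow> X (butlast a) i = X a i"
    unfolding bt by (simp add: X_take)
  have M: "ms (butlast a) {1..length (butlast a)} = ms a {1..<?n}"
  proof -
    have e: "{1..<?n} = {1..length (butlast a)}" using ln by auto
    show ?thesis unfolding e by (rule ms_cong) (simp add: bt spt_take)
  qed
  have R: "rp a = rp (butlast a) * \<rho> (last a)"
    using append_butlast_last_id[OF assms(1)] rp_append[of "butlast a" "[last a]"]
    by (simp add: rp_def)
  have "Wo a = VW (ms a {1..<?n}) * rp a" by (simp only: Wo_def)
  then show "Wo a = W1 (butlast a) * \<rho> (last a)" unfolding M[symmetric] R by (simp only: W1_def mult_ac)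
qed

lemma butlast_bound:
  assumes z: "0 \<le> z" and P: "\<And>us. P us \<Longrightarrow> P (butlast us)"
  shows "(\<Sum>a\<in>{a\<in>LS M. P a}. Wo a * z ^ length a) \<le> 1 + z * (\<Sum>c\<in>{c\<in>LS M. P c}. W1 c * z ^ length c)"
proof -
  let ?A = "{a\<in>LS M. P a}"
  let ?h = "\<lambda>a. Wo a * z ^ length a"
  have split: "?A = (?A \<inter> {[]}) \<union> (?A - {[]})" by auto
  have "sum ?h ?A = sum ?h (?A \<inter> {[]}) + sum ?h (?A - {[]})"
    by (subst split, rule sum.union_disjoint) (auto simp: finite_LSP)
  also have "sum ?h (?A \<inter> {[]}) \<le> 1"
  proof -
    have "sum ?h (?A \<inter> {[]}) \<le> sum ?h {[]}"
      by (rule sum_mono2) (auto simp: Wo_def rp_def ms_def)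
    also have "\<dots> = 1" by (simp add: Wo_def rp_def ms_def)
    finally show ?thesis .
  qed
  also have "sum ?h (?A - {[]}) \<le> (\<Sum>c\<in>{c\<in>LS M. P c}. W1 c * z ^ length c) * (\<Sum>v\<in>\<Omega>. z * \<rho> v)"
  proof (rule sum_inj_prod_le[where F = "\<lambda>a. (butlast a, last a)"])
    show "inj_on (\<lambda>a. (butlast a, last a)) (?A - {[]})"
    proof (rule inj_onI)
      fix x y assume x: "x \<in> ?A - {[]}" and y: "y \<in> ?A - {[]}" and e: "(butlast x, last x) = (butlast y, last y)"
      have "x = butlast x @ [last x]" using x by simp
      also have "\<dots> = butlast y @ [last y]" using e by simp
      also have "\<dots> = y" using y by simp
      finally show "x = y" .
    qed
    show "(\<lambda>a. (butlast a, last a)) ` (?A - {[]}) \<subseteq> {c\<in>LS M. P c} \<times> \<Omega>"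
    proof
      fix p assume "p \<in> (\<lambda>a. (butlast a, last a)) ` (?A - {[]})"
      then obtain a where a: "a \<in> ?A" "a \<noteq> []" "p = (butlast a, last a)" by auto
      then have sa: "set a \<subseteq> \<Omega>" and la: "length a \<le> M" and pa: "P a" by (auto simp: LS_iff)
      note bf = butlast_facts[OF a(2) sa]
      have "butlast a \<in> {c\<in>LS M. P c}" using bf(2) la pa P by (simp add: LS_iff)
      then show "p \<in> {c\<in>LS M. P c} \<times> \<Omega>" using bf(3) a(3) by simp
    qed
    fix a assume a: "a \<in> ?A - {[]}"
    then have an: "a \<noteq> []" and sa: "set a \<subseteq> \<Omega>" by (auto simp: LS_iff)
    note bf = butlast_facts[OF an sa]
    show "?h a \<le> W1 (fst (butlast a, last a)) * z ^ length (fst (butlast a, last a)) *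
        (z * \<rho> (snd (butlast a, last a)))"
    proof -
      have zz: "z ^ length a = z ^ length (butlast a) * z" by (subst bf(4)) (simp only: power_Suc2)
      have "?h a = W1 (butlast a) * \<rho> (last a) * (z ^ length (butlast a) * z)"
        by (simp only: bf(1) zz)
      then show ?thesis by (simp only: fst_conv snd_conv mult_ac)
    qed
  qed (auto simp: finite_LSP2 finO LS_iff W1_nonneg z rhonn)
  also have "(\<Sum>v\<in>\<Omega>. z * \<rho> v) = z" by (simp add: sum_distrib_left[symmetric] rhosum)
  finally show ?thesis by (simp add: mult_ac)
qed

lemma shs_butlast: "shs us \<Longrightarrow> shs (butlast us)"
  unfolding shs_def by (auto simp: butlast_conv_take X_take)

end


context wsetup begin

lemma ws_split:
  assumes so: "set c \<subseteq> \<Omega>" and u: "u \<in> \<Omega>" "u 0 > 0"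
  defines "mn \<equiv> Min (X c ` {..length c})"
  defines "k \<equiv> Max {i. i \<le> length c \<and> X c i = mn}"
  shows "k \<le> length c"
    "shs (u # rev (map uminus (take k c)))" "shs (drop k c)"
    "set (u # rev (map uminus (take k c))) \<subseteq> \<Omega>" "set (drop k c) \<subseteq> \<Omega>"
    "length (u # rev (map uminus (take k c))) + length (drop k c) = Suc (length c)"
    "W1 c * \<rho> u \<le> Wo (u # rev (map uminus (take k c))) * W1 (drop k c)"
proof -
  let ?n = "length c"
  let ?I = "{i. i \<le> ?n \<and> X c i = mn}"
  let ?A = "u # rev (map uminus (take k c))" and ?B = "drop k c"
  have finS: "finite (X c ` {..?n})" by simp
  have mnle: "mn \<le> X c i" if "i \<le> ?n" for i unfolding mn_def by (rule Min_le[OF finS]) (use that in auto)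
  have "mn \<in> X c ` {..?n}" unfolding mn_def by (rule Min_in[OF finS]) auto
  then have neI: "?I \<noteq> {}" by auto
  have finI: "finite ?I" by (rule finite_subset[of _ "{..?n}"]) auto
  have kI: "k \<in> ?I" unfolding k_def using finI neI by (rule Max_in)
  then show kn: "k \<le> ?n" by simp
  have Xk: "X c k = mn" using kI by simp
  have Xgt: "mn < X c i" if "k < i" "i \<le> ?n" for i
  proof -
    have "X c i \<noteq> mn"
    proof
      assume "X c i = mn"
      then have "i \<in> ?I" using that by simp
      then have "i \<le> k" unfolding k_def by (rule Max_ge[OF finI])
      then show False using that by simp
    qed
    then show ?thesis using mnle[OF that(2)] by simp
  qed
  have sptA: "spt ?A (Suc j) = u + (spt c (k - j) - spt c k)" if "j \<le> k" for j
    using that kn by (simp add: spt_Cons spt_rev_neg)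
  have XA: "X ?A (Suc j) = u 0 + X c (k - j) - mn" if "j \<le> k" for j
    using sptA[OF that] Xk by (simp add: X_def)
  show "shs ?A" unfolding shs_def
  proof
    fix i assume i: "i \<in> {1..length ?A}"
    then obtain j where j: "i = Suc j" "j \<le> k" by (cases i) auto
    have "mn \<le> X c (k - j)" using kn by (intro mnle) simp
    then show "0 < X ?A i" using XA[OF j(2)] u(2) j(1) by simp
  qed
  show "shs ?B" unfolding shs_def
  proof
    fix j assume j: "j \<in> {1..length ?B}"
    then have "mn < X c (k + j)" using kn by (intro Xgt) auto
    then show "0 < X ?B j" by (simp add: X_drop Xk)
  qed
  show "set ?A \<subseteq> \<Omega>" using so u neg_O(1) by (auto dest: in_set_takeD)
  show "set ?B \<subseteq> \<Omega>" using so by (auto dest: in_set_dropD)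
  show "length ?A + length ?B = Suc ?n" using kn by simp
  let ?T1 = "\<lambda>p. u + (p - spt c k)" and ?T2 = "\<lambda>p. p - spt c k"
  have U: "{1..?n} = {1..k} \<union> {k+1..?n}" using kn by auto
  have V1: "VW (ms c {1..?n}) \<le> VW (ms c {1..k}) * VW (ms c {k+1..?n})"
    unfolding U by (subst ms_union) (auto intro: VW_add)
  have I1: "(\<lambda>i. Suc (k - i)) ` {1..k} = {1..k}"
  proof
    show "{1..k} \<subseteq> (\<lambda>i. Suc (k - i)) ` {1..k}"
    proof
      fix j assume "j \<in> {1..k}" then show "j \<in> (\<lambda>i. Suc (k - i)) ` {1..k}"
        by (intro image_eqI[of _ _ "Suc k - j"]) auto
    qed
  qed auto
  have MA: "ms ?A {1..k} = image_mset ?T1 (ms c {1..k})"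
  proof -
    have "ms ?A ((\<lambda>i. Suc (k - i)) ` {1..k}) = image_mset ?T1 (ms c {1..k})"
    proof (rule ms_reindex)
      show "inj_on (\<lambda>i. Suc (k - i)) {1..k}" by (auto simp: inj_on_def)
      fix i assume i: "i \<in> {1..k}"
      then have "spt ?A (Suc (k - i)) = u + (spt c (k - (k - i)) - spt c k)" by (intro sptA) auto
      then show "spt ?A (Suc (k - i)) = ?T1 (spt c i)" using i by simp
    qed simp
    then show ?thesis unfolding I1 .
  qed
  have I2: "(\<lambda>i. i - k) ` {k+1..?n} = {1..?n - k}"
  proof
    show "{1..?n - k} \<subseteq> (\<lambda>i. i - k) ` {k+1..?n}"
    proof
      fix j assume "j \<in> {1..?n - k}" then show "j \<in> (\<lambda>i. i - k) ` {k+1..?n}"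
        by (intro image_eqI[of _ _ "j + k"]) auto
    qed
  qed auto
  have MB: "ms ?B {1..?n - k} = image_mset ?T2 (ms c {k+1..?n})"
    unfolding I2[symmetric] by (rule ms_reindex) (auto simp: inj_on_def spt_drop)
  have inj1: "inj ?T1" by (auto simp: inj_def)
  have inj2: "inj ?T2" by (auto simp: inj_def)
  have RA: "rp ?A = \<rho> u * rp (take k c)"
  proof -
    have "rp (map uminus (take k c)) = rp (take k c)"
      by (rule rp_map) (use so neg_O(2) in \<open>auto dest: in_set_takeD\<close>)
    then show ?thesis by (simp add: rp_def rev_map[symmetric] prod_list.rev)
  qed
  have RC: "rp c = rp (take k c) * rp ?B" by (metis append_take_drop_id rp_append)
  have lA: "length ?A = Suc k" using kn by simp
  have WA: "Wo ?A = VW (ms c {1..k}) * (\<rho> u * rp (take k c))"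
  proof -
    have e: "{1..<length ?A} = {1..k}" using lA by auto
    have "Wo ?A = VW (ms ?A {1..k}) * rp ?A" unfolding Wo_def e ..
    also have "\<dots> = VW (ms c {1..k}) * (\<rho> u * rp (take k c))"
      by (simp only: MA VW_image[OF inj1] RA)
    finally show ?thesis .
  qed
  have WB: "W1 ?B = VW (ms c {k+1..?n}) * rp ?B"
  proof -
    have e: "length ?B = ?n - k" by simp
    show ?thesis unfolding W1_def e MB VW_image[OF inj2] ..
  qed
  have "W1 c * \<rho> u = VW (ms c {1..?n}) * (rp c * \<rho> u)" by (simp add: W1_def mult_ac)
  also have "\<dots> \<le> VW (ms c {1..k}) * VW (ms c {k+1..?n}) * (rp c * \<rho> u)"
    by (rule mult_right_mono[OF V1]) (use rp_nonneg[OF so] rhonn u in simp)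
  also have "\<dots> = Wo ?A * W1 ?B" unfolding WA WB RC by (simp only: mult_ac)
  finally show "W1 c * \<rho> u \<le> Wo ?A * W1 ?B" .
qed

lemma walk_sum:
  assumes z: "0 < z" and u: "u \<in> \<Omega>" "u 0 > 0" "\<rho> u > 0"
  shows "(\<Sum>c\<in>LS N. W1 c * z ^ length c) \<le>
    (\<Sum>a\<in>{a\<in>LS (Suc N). shs a}. Wo a * z ^ length a / (\<rho> u * z)) *
    (\<Sum>b\<in>{b\<in>LS N. shs b}. W1 b * z ^ length b)"
proof -
  define kk where "kk = (\<lambda>c. Max {i. i \<le> length c \<and> X c i = Min (X c ` {..length c})})"
  define F where "F = (\<lambda>c. (u # rev (map uminus (take (kk c) c)), drop (kk c) c))"
  have sp: "kk c \<le> length c"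
    "shs (fst (F c))" "shs (snd (F c))" "set (fst (F c)) \<subseteq> \<Omega>" "set (snd (F c)) \<subseteq> \<Omega>"
    "length (fst (F c)) + length (snd (F c)) = Suc (length c)"
    "W1 c * \<rho> u \<le> Wo (fst (F c)) * W1 (snd (F c))" if "set c \<subseteq> \<Omega>" for c
    using ws_split[OF that u(1,2)] unfolding F_def kk_def by simp_all
  show ?thesis
  proof (rule sum_inj_prod_le[where F = F])
    show "inj_on F (LS N)"
    proof (rule inj_onI)
      fix x y assume x: "x \<in> LS N" and y: "y \<in> LS N" and e: "F x = F y"
      have kx: "kk x \<le> length x" and ky: "kk y \<le> length y" using sp(1) x y by (auto simp: LS_iff)
      have e1: "rev (map uminus (take (kk x) x)) = rev (map uminus (take (kk y) y))"
        and e2: "drop (kk x) x = drop (kk y) y" using e by (simp_all add: F_def)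
      have "map uminus (take (kk x) x) = map uminus (take (kk y) y)" using e1 by simp
      then have "take (kk x) x = take (kk y) y"
        by (rule map_injective) (auto simp: inj_def)
      then show "x = y" using e2 by (metis append_take_drop_id)
    qed
    show "F ` LS N \<subseteq> {a\<in>LS (Suc N). shs a} \<times> {b\<in>LS N. shs b}"
    proof
      fix p assume "p \<in> F ` LS N"
      then obtain c where c: "c \<in> LS N" "p = F c" by auto
      then have sc: "set c \<subseteq> \<Omega>" and lc: "length c \<le> N" by (auto simp: LS_iff)
      have "length (snd (F c)) \<le> N" using lc by (simp add: F_def)
      moreover have "length (fst (F c)) \<le> Suc N" using sp(6)[OF sc] lc by linarith
      ultimately show "p \<in> {a\<in>LS (Suc N). shs a} \<times> {b\<in>LS N. shs b}"
        using sp(2-5)[OF sc] c(2) by (simp add: LS_iff mem_Times_iff)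
    qed
    fix c assume "c \<in> LS N"
    then have sc: "set c \<subseteq> \<Omega>" by (auto simp: LS_iff)
    let ?A = "fst (F c)" and ?B = "snd (F c)"
    have ineq: "W1 c * \<rho> u \<le> Wo ?A * W1 ?B" by (rule sp(7)[OF sc])
    have zz: "z ^ length ?A * z ^ length ?B = z ^ length c * z"
      using sp(6)[OF sc] by (simp add: power_add[symmetric])
    have "W1 c * z ^ length c = (W1 c * \<rho> u) * z ^ length c / \<rho> u" using u(3) by simp
    also have "\<dots> \<le> (Wo ?A * W1 ?B) * z ^ length c / \<rho> u"
      by (intro divide_right_mono mult_right_mono ineq) (use z u(3) in auto)
    also have "\<dots> = Wo ?A * z ^ length ?A / (\<rho> u * z) * (W1 ?B * z ^ length ?B)"
    proof -
      have "Wo ?A * z ^ length ?A / (\<rho> u * z) * (W1 ?B * z ^ length ?B) =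
          Wo ?A * W1 ?B * (z ^ length ?A * z ^ length ?B) / (\<rho> u * z)" by simp
      also have "\<dots> = Wo ?A * W1 ?B * z ^ length c / \<rho> u" unfolding zz using z by simp
      finally show ?thesis by simp
    qed
    finally show "W1 c * z ^ length c \<le> Wo ?A * z ^ length ?A / (\<rho> u * z) * (W1 ?B * z ^ length ?B)" .
  qed (auto simp: finite_LSP2 LS_iff Wo_nonneg W1_nonneg z u(3) less_imp_le)
qed

lemma Hs_mono: "0 \<le> z \<Longrightarrow> M \<le> M' \<Longrightarrow> Hs z M \<le> Hs z M'"
  unfolding Hs_def by (rule sum_mono2) (auto simp: hh_nonneg)

lemma Zo_sum_bound:
  obtains c where "c > 0" "\<And>z N. 0 < z \<Longrightarrow>
    (\<Sum>n\<in>{..N}. Zo n * z ^ n) \<le> 1 + (1 + z * exp (Hs z (Suc N))) * exp (Hs z (Suc N)) / c"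
proof -
  obtain u where u: "u \<in> \<Omega>" "u 0 > 0" "\<rho> u > 0" using pos_step by blast
  show ?thesis
  proof (rule that[of "\<rho> u"])
    show "\<rho> u > 0" by (rule u(3))
    fix z :: real and N assume z: "0 < z"
    define E where "E = exp (Hs z (Suc N))"
    have QN: "(\<Sum>b\<in>{b\<in>LS N. shs b}. W1 b * z ^ length b) \<le> E"
    proof -
      have "exp (Hs z N) \<le> E" unfolding E_def using Hs_mono[of z N "Suc N"] z by simp
      then show ?thesis using Qtot_le[of z N] z by simp
    qed
    have QS: "(\<Sum>b\<in>{b\<in>LS (Suc N). shs b}. W1 b * z ^ length b) \<le> E"
      using Qtot_le[of z "Suc N"] z unfolding E_def by simp
    have SA: "(\<Sum>a\<in>{a\<in>LS (Suc N). shs a}. Wo a * z ^ length a) \<le> 1 + z * E"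
    proof -
      have "(\<Sum>a\<in>{a\<in>LS (Suc N). shs a}. Wo a * z ^ length a) \<le>
         1 + z * (\<Sum>b\<in>{b\<in>LS (Suc N). shs b}. W1 b * z ^ length b)"
        by (rule butlast_bound) (use z shs_butlast in auto)
      also have "z * (\<Sum>b\<in>{b\<in>LS (Suc N). shs b}. W1 b * z ^ length b) \<le> z * E"
        by (rule mult_left_mono[OF QS]) (use z in simp)
      finally show ?thesis by simp
    qed
    define QQ where "QQ = (\<Sum>b\<in>{b\<in>LS N. shs b}. W1 b * z ^ length b)"
    have SAn: "0 \<le> QQ" unfolding QQ_def
      by (rule sum_nonneg) (auto simp: LS_iff W1_nonneg z less_imp_le)
    have S1: "(\<Sum>n\<in>{..N}. Zo n * z ^ n) \<le> 1 + z * (\<Sum>c\<in>{c\<in>LS N. True}. W1 c * z ^ length c)"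
    proof -
      have "(\<Sum>n\<in>{..N}. Zo n * z ^ n) = (\<Sum>us\<in>{us\<in>LS N. True}. Wo us * z ^ length us)"
        using group_len[of Wo z N "\<lambda>_. True"] by (simp add: Zo_def)
      also have "\<dots> \<le> 1 + z * (\<Sum>c\<in>{c\<in>LS N. True}. W1 c * z ^ length c)"
        by (rule butlast_bound) (use z in auto)
      finally show ?thesis .
    qed
    have S2: "(\<Sum>c\<in>{c\<in>LS N. True}. W1 c * z ^ length c) \<le> (1 + z * E) / (\<rho> u * z) * QQ"
    proof -
      have "(\<Sum>c\<in>{c\<in>LS N. True}. W1 c * z ^ length c) \<le>
        (\<Sum>a\<in>{a\<in>LS (Suc N). shs a}. Wo a * z ^ length a / (\<rho> u * z)) * QQ"
        using walk_sum[OF z u] unfolding QQ_def by simp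
      also have "(\<Sum>a\<in>{a\<in>LS (Suc N). shs a}. Wo a * z ^ length a / (\<rho> u * z)) =
          (\<Sum>a\<in>{a\<in>LS (Suc N). shs a}. Wo a * z ^ length a) / (\<rho> u * z)"
        by (simp add: sum_divide_distrib)
      also have "(\<Sum>a\<in>{a\<in>LS (Suc N). shs a}. Wo a * z ^ length a) / (\<rho> u * z) * QQ \<le>
           (1 + z * E) / (\<rho> u * z) * QQ"
        by (intro mult_right_mono divide_right_mono SA) (use z u(3) SAn in simp_all)
      finally show ?thesis .
    qed
    have S3: "(1 + z * E) / (\<rho> u * z) * QQ \<le> (1 + z * E) / (\<rho> u * z) * E"
    proof (rule mult_left_mono)
      show "QQ \<le> E" using QN unfolding QQ_def .
      show "0 \<le> (1 + z * E) / (\<rho> u * z)" using z u(3) by (simp add: E_def add_nonneg_nonneg)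
    qed
    have "(\<Sum>n\<in>{..N}. Zo n * z ^ n) \<le> 1 + z * ((1 + z * E) / (\<rho> u * z) * E)"
    proof -
      have "z * (\<Sum>c\<in>{c\<in>LS N. True}. W1 c * z ^ length c) \<le> z * ((1 + z * E) / (\<rho> u * z) * E)"
        by (rule mult_left_mono) (use S2 S3 z in auto)
      then show ?thesis using S1 by simp
    qed
    also have "\<dots> = 1 + (1 + z * E) * E / \<rho> u" using z u(3) by (simp add: field_simps)
    finally show "(\<Sum>n\<in>{..N}. Zo n * z ^ n) \<le> 1 + (1 + z * exp (Hs z (Suc N))) * exp (Hs z (Suc N)) / \<rho> u"
      unfolding E_def .
  qed
qed

end


definition pts :: "pt list \<Rightarrow> pt list" where "pts us = map (spt us) [0..<Suc (length us)]"

lemma pts_length[simp]: "length (pts us) = Suc (length us)" by (simp add: pts_def)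
lemma pts_nth: "i \<le> length us \<Longrightarrow> pts us ! i = spt us i"
  by (simp add: pts_def nth_map_upt less_Suc_eq_le del: upt_Suc)

lemma spt_diff: "i < length us \<Longrightarrow> spt us (Suc i) - spt us i = us ! i"
  by (simp add: spt_Suc)

lemma inj_pts: "inj pts"
proof (rule injI)
  fix x y assume e: "pts x = pts y"
  then have l: "length x = length y" using pts_length by (metis nat.inject)
  show "x = y"
  proof (rule nth_equalityI[OF l])
    fix i assume i: "i < length x"
    have "x ! i = pts x ! Suc i - pts x ! i" using i by (simp add: pts_nth spt_diff)
    also have "\<dots> = pts y ! Suc i - pts y ! i" using e by simp
    also have "\<dots> = y ! i" using i l by (simp add: pts_nth spt_diff)
    finally show "x ! i = y ! i" .
  qed
qed

lemma bridge_pts: "is_bridge (pts us) = brg us"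
proof -
  have "is_bridge (pts us) \<longleftrightarrow> (\<forall>i\<in>{1..<Suc (length us)}. 0 < X us i \<and> X us i \<le> X us (length us))"
    unfolding is_bridge_def by (simp add: pts_nth xcoord_def X_def del: upt_Suc)
  also have "\<dots> \<longleftrightarrow> brg us"
  proof
    assume h: "\<forall>i\<in>{1..<Suc (length us)}. 0 < X us i \<and> X us i \<le> X us (length us)"
    have "shs us" using h by (auto simp: shs_def)
    moreover have "X us i \<le> X us (length us)" if "i \<le> length us" for i
    proof (cases "i = 0")
      case True
      then show ?thesis using h by (cases "length us") (auto simp: less_imp_le)
    next
      case False then show ?thesis using h that by auto
    qed
    ultimately show "brg us" by (simp add: brg_def)
  next
    assume "brg us" then show "\<forall>i\<in>{1..<Suc (length us)}. 0 < X us i \<and> X us i \<le> X us (length us)"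
      by (auto simp: brg_def shs_def)
  qed
  finally show ?thesis .
qed

context wsetup begin

lemma weight_pts: "weight \<phi> \<rho> (pts us) = Wf us"
proof -
  let ?n = "length us"
  have S: "set (pts us) = set_mset (ms us {0..?n})"
    by (simp add: pts_def set_ms atLeastLessThanSuc_atLeastAtMost del: upt_Suc)
  have L: "local_time (pts us) v = count (ms us {0..?n}) v" for v
  proof -
    have "{k. k < length (pts us) \<and> pts us ! k = v} = {k\<in>{0..?n}. spt us k = v}"
      by (auto simp: pts_nth less_Suc_eq_le)
    then show ?thesis
      by (simp add: local_time_def ms_def count_image_mset_eq_card_vimage)
  qed
  have P: "(\<Prod>i\<in>{1..<length (pts us)}. \<rho> (pts us ! i - pts us ! (i - 1))) = rp us"
  proof -
    have "(\<Prod>i\<in>{1..<length (pts us)}. \<rho> (pts us ! i - pts us ! (i - 1))) =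
        (\<Prod>i\<in>{Suc 0..<Suc ?n}. \<rho> (pts us ! i - pts us ! (i - 1)))" by simp
    also have "\<dots> = (\<Prod>i\<in>{0..<?n}. \<rho> (pts us ! Suc i - pts us ! i))"
      by (simp only: prod.shift_bounds_Suc_ivl diff_Suc_1)
    also have "\<dots> = (\<Prod>i\<in>{0..<?n}. \<rho> (us ! i))"
      by (rule prod.cong) (auto simp: pts_nth spt_diff)
    also have "\<dots> = rp us" by (simp add: rp_def prod.list_conv_set_nth)
    finally show ?thesis .
  qed
  show ?thesis unfolding weight_def Wf_def VW_def S L P ..
qed

lemma walks_eq: "walks \<Omega> n = pts ` LE n"
proof
  show "pts ` LE n \<subseteq> walks \<Omega> n"
  proof
    fix g assume "g \<in> pts ` LE n"
    then obtain us where us: "us \<in> LE n" "g = pts us" by auto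
    have "pts us ! i - pts us ! (i - 1) \<in> \<Omega>" if ii: "i \<in> {1..n}" for i
    proof -
      obtain j where j: "i = Suc j" "j < n" using ii by (cases i) auto
      then have "pts us ! i - pts us ! (i - 1) = us ! j" using us by (simp add: pts_nth spt_diff LE_iff)
      then show ?thesis using us j by (auto simp: LE_iff)
    qed
    then show "g \<in> walks \<Omega> n" using us by (auto simp: walks_def LE_iff pts_nth)
  qed
  show "walks \<Omega> n \<subseteq> pts ` LE n"
  proof
    fix g assume g: "g \<in> walks \<Omega> n"
    define us where "us = map (\<lambda>i. g ! Suc i - g ! i) [0..<n]"
    have lu: "length us = n" by (simp add: us_def)
    have su: "set us \<subseteq> \<Omega>"
    proof
      fix v assume "v \<in> set us"
      then obtain i where i: "i < n" "v = g ! Suc i - g ! i" by (auto simp: us_def)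
      have "\<forall>j\<in>{1..n}. g ! j - g ! (j - 1) \<in> \<Omega>" using g by (simp add: walks_def)
      then have "g ! Suc i - g ! (Suc i - 1) \<in> \<Omega>" 
      proof -
        have "Suc i \<in> {1..n}" using i(1) by simp
        then show ?thesis using \<open>\<forall>j\<in>{1..n}. g ! j - g ! (j - 1) \<in> \<Omega>\<close> by blast
      qed
      then show "v \<in> \<Omega>" using i(2) by simp
    qed
    have sp: "spt us i = g ! i" if "i \<le> n" for i
      using that
    proof (induction i)
      case 0 then show ?case using g by (simp add: walks_def)
    next
      case (Suc i)
      then have "spt us (Suc i) = spt us i + us ! i" using lu by (simp add: spt_Suc)
      also have "\<dots> = g ! i + (g ! Suc i - g ! i)" using Suc by (simp add: us_def)
      finally show ?case by simp
    qed
    have "pts us = g"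
    proof (rule nth_equalityI)
      show "length (pts us) = length g" using g lu by (simp add: walks_def)
      fix i assume "i < length (pts us)"
      then show "pts us ! i = g ! i" using lu sp by (simp add: pts_nth)
    qed
    moreover have "us \<in> LE n" using lu su by (simp add: LE_iff)
    ultimately show "g \<in> pts ` LE n" by auto
  qed
qed

lemma Zpart_eq: "Zpart \<Omega> \<phi> \<rho> n = Zf n"
proof -
  have "Zpart \<Omega> \<phi> \<rho> n = (\<Sum>g\<in>pts ` LE n. weight \<phi> \<rho> g)" by (simp add: Zpart_def walks_eq)
  also have "\<dots> = (\<Sum>us\<in>LE n. weight \<phi> \<rho> (pts us))"
    by (rule sum.reindex_cong[of pts]) (auto intro: inj_on_subset[OF inj_pts])
  also have "\<dots> = Zf n" by (simp add: Zf_def weight_pts)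
  finally show ?thesis .
qed

lemma Hbridge_eq: "Hbridge \<Omega> \<phi> \<rho> n = hh n"
proof (cases "n = 0")
  case True then show ?thesis by (simp add: Hbridge_def hh_0)
next
  case False
  have e: "{g\<in>walks \<Omega> n. is_bridge g} = pts ` {us\<in>LE n. brg us}"
    by (auto simp: walks_eq bridge_pts)
  have "Hbridge \<Omega> \<phi> \<rho> n = (\<Sum>g\<in>pts ` {us\<in>LE n. brg us}. weight \<phi> \<rho> g)"
    using False by (simp add: Hbridge_def e)
  also have "\<dots> = (\<Sum>us\<in>{us\<in>LE n. brg us}. weight \<phi> \<rho> (pts us))"
    by (rule sum.reindex_cong[of pts]) (auto intro: inj_on_subset[OF inj_pts])
  also have "\<dots> = hh n" by (simp add: hh_def weight_pts)
  finally show ?thesis .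
qed

end


lemma super_mult:
  fixes a :: "nat \<Rightarrow> real"
  assumes sup: "\<And>n m. a n + a m \<le> a (n + m)" and a0: "a 0 = 0"
  shows "real q * a k \<le> a (q * k)"
proof (induction q)
  case 0 then show ?case by (simp add: a0)
next
  case (Suc q)
  have "real (Suc q) * a k = real q * a k + a k" by (simp add: algebra_simps)
  also have "\<dots> \<le> a (q * k) + a k" using Suc by simp
  also have "\<dots> \<le> a (q * k + k)" by (rule sup)
  finally show ?case by (simp add: add.commute)
qed

lemma fekete_super:
  fixes a :: "nat \<Rightarrow> real"
  assumes sup: "\<And>n m. a n + a m \<le> a (n + m)" and a0: "a 0 = 0" and le0: "\<And>n. a n \<le> 0"
  defines "S \<equiv> (SUP n\<in>{1..}. a n / real n)"
  shows "(\<lambda>n. a n / real n) \<longlonglongrightarrow> S" "\<And>n. 1 \<le> n \<Longrightarrow> a n / real n \<le> S"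
proof -
  have bdd: "bdd_above ((\<lambda>n. a n / real n) ` {1..})"
    by (rule bdd_aboveI[of _ 0]) (auto simp: divide_nonpos_nonneg le0)
  show up: "\<And>n. 1 \<le> n \<Longrightarrow> a n / real n \<le> S"
    unfolding S_def by (rule cSUP_upper[OF _ bdd]) auto
  have low: "a k / real k + m / real n \<le> a n / real n"
    if k: "1 \<le> k" and n: "1 \<le> n" and m: "\<And>r. r < k \<Longrightarrow> m \<le> a r" for k n m
  proof -
    define q where "q = n div k"
    define r where "r = n mod k"
    have nqr: "n = q * k + r" by (simp add: q_def r_def)
    have rk: "r < k" using k by (simp add: r_def)
    have "a n \<ge> a (q * k) + a r" using sup[of "q * k" r] nqr by simp
    moreover have "a (q * k) \<ge> real q * a k" by (rule super_mult[OF sup a0])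
    moreover have "real q * a k \<ge> (real n / real k) * a k"
    proof -
      have "real q \<le> real n / real k" unfolding q_def by (rule of_nat_div_le_of_nat)
      from mult_right_mono_neg[OF this le0[of k]] show ?thesis by simp
    qed
    moreover have "a r \<ge> m" using m rk by simp
    ultimately have "a n \<ge> (real n / real k) * a k + m" by linarith
    then have "a n / real n \<ge> ((real n / real k) * a k + m) / real n"
      using n by (simp add: divide_right_mono)
    also have "((real n / real k) * a k + m) / real n = a k / real k + m / real n"
      using n by (simp add: field_simps)
    finally show ?thesis .
  qed
  show "(\<lambda>n. a n / real n) \<longlonglongrightarrow> S"
  proof (rule LIMSEQ_I)
    fix e :: real assume e: "0 < e"
    have ne: "{1::nat..} \<noteq> {}" by auto
    have "S - e / 2 < S" using e by simp
    then obtain k where k: "k \<in> {1..}" "S - e / 2 < a k / real k"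
      unfolding S_def using less_cSUP_iff[OF ne bdd] by blast
    define m where "m = Min (a ` {..<k})"
    have m: "m \<le> a r" if "r < k" for r unfolding m_def using that by (intro Min_le) auto
    have m0: "m \<le> 0" using m[of 0] k le0[of 0] by auto
    obtain N :: nat where N: "N > - 2 * m / e" using reals_Archimedean2 by blast
    show "\<exists>no. \<forall>n\<ge>no. norm (a n / real n - S) < e"
    proof (intro exI allI impI)
      fix n assume n: "max 1 (Suc N) \<le> n"
      have n1: "1 \<le> n" using n by simp
      have "- m / real n < e / 2"
      proof -
        have "- 2 * m / e < real n" using N n by linarith
        then have "(- 2 * m / e) * e < real n * e" using e by (intro mult_strict_right_mono) auto
        then have "- 2 * m < real n * e" using e by simp
        moreover have np: "0 < real n" using n1 by simp
        ultimately have "(- 2 * m) / real n < e"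
          using pos_divide_less_eq[OF np, of "- 2 * m" e] by (metis mult.commute)
        moreover have "- m / real n = ((- 2 * m) / real n) / 2" by simp
        ultimately show ?thesis by linarith
      qed
      moreover have "a k / real k + m / real n \<le> a n / real n"
        using k(1) by (intro low[of k n m, OF _ n1 m]) auto
      ultimately have "a n / real n > S - e" using k(2) by simp
      moreover have "a n / real n \<le> S" by (rule up[OF n1])
      ultimately show "norm (a n / real n - S) < e" using e by simp
    qed
  qed
qed


context wsetup begin

definition lamH where "lamH = (SUP n\<in>{1..}. ln (hh n) / real n)"

lemma lnhh:
  shows "\<And>n m. ln (hh n) + ln (hh m) \<le> ln (hh (n + m))" "ln (hh 0) = 0" "\<And>n. ln (hh n) \<le> 0"
proof -
  fix n m
  have "ln (hh n) + ln (hh m) = ln (hh n * hh m)" using hh_pos[of n] hh_pos[of m] by (simp add: ln_mult)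
  also have "\<dots> \<le> ln (hh (n + m))"
    using hh_supermult[of n m] hh_pos[of n] hh_pos[of m] hh_pos[of "n+m"] by (subst ln_le_cancel_iff) auto
  finally show "ln (hh n) + ln (hh m) \<le> ln (hh (n + m))" .
next
  show "ln (hh 0) = 0" by (simp add: hh_0)
next
  fix n show "ln (hh n) \<le> 0" using hh_le1[of n] hh_pos[of n] by simp
qed

lemma lamH_lim: "(\<lambda>n. ln (hh n) / real n) \<longlonglongrightarrow> lamH"
  unfolding lamH_def by (rule fekete_super(1)[OF lnhh])

lemma hh_le_exp: "hh n \<le> exp (lamH * real n)"
proof (cases "n = 0")
  case True then show ?thesis by (simp add: hh_0)
next
  case False
  then have "ln (hh n) / real n \<le> lamH" unfolding lamH_def by (intro fekete_super(2)[OF lnhh]) auto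
  then have "ln (hh n) \<le> lamH * real n" using False by (simp add: divide_le_eq)
  then show ?thesis using hh_pos[of n] by (metis exp_le_cancel_iff exp_ln)
qed

lemma Hs_bound:
  assumes z: "0 < z" and q: "z * exp lamH < 1"
  shows "Hs z M \<le> 1 / (1 - z * exp lamH)"
proof -
  let ?q = "z * exp lamH"
  have q0: "0 \<le> ?q" using z by simp
  have "Hs z M \<le> (\<Sum>n\<in>{..M}. ?q ^ n)"
    unfolding Hs_def
  proof (rule sum_mono)
    fix n
    have "hh n * z ^ n \<le> exp (lamH * real n) * z ^ n"
      by (rule mult_right_mono[OF hh_le_exp]) (use z in simp)
    also have "\<dots> = ?q ^ n" by (simp add: exp_of_nat_mult[symmetric] power_mult_distrib mult.commute)
    finally show "hh n * z ^ n \<le> ?q ^ n" .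
  qed
  also have "\<dots> \<le> (\<Sum>n. ?q ^ n)"
    by (rule sum_le_suminf) (use q q0 in \<open>auto intro!: summable_geometric\<close>)
  also have "\<dots> = 1 / (1 - ?q)" using q q0 by (simp add: suminf_geometric)
  finally show ?thesis .
qed

lemma Zo_bounded:
  assumes z: "0 < z" and q: "z * exp lamH < 1"
  obtains C where "C > 0" "\<And>N. (\<Sum>n\<in>{..N}. Zo n * z ^ n) \<le> C"
proof -
  obtain c where c: "c > 0" "\<And>z N. 0 < z \<Longrightarrow>
    (\<Sum>n\<in>{..N}. Zo n * z ^ n) \<le> 1 + (1 + z * exp (Hs z (Suc N))) * exp (Hs z (Suc N)) / c"
    using Zo_sum_bound by blast
  define G where "G = 1 / (1 - z * exp lamH)"
  define C where "C = 1 + (1 + z * exp G) * exp G / c"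
  show ?thesis
  proof (rule that[of C])
    show "C > 0" unfolding C_def using z c(1) by (simp add: add_pos_nonneg)
    fix N
    have E: "exp (Hs z (Suc N)) \<le> exp G" unfolding G_def using Hs_bound[OF z q] by simp
    have "(1 + z * exp (Hs z (Suc N))) * exp (Hs z (Suc N)) \<le> (1 + z * exp G) * exp G"
      by (intro mult_mono add_left_mono mult_left_mono E) (use z in auto)
    then have "1 + (1 + z * exp (Hs z (Suc N))) * exp (Hs z (Suc N)) / c \<le> C"
      unfolding C_def using c(1) by (simp add: divide_right_mono)
    then show "(\<Sum>n\<in>{..N}. Zo n * z ^ n) \<le> C" using c(2)[OF z, of N] by simp
  qed
qed

lemma Zo_pow: "Zo (k * n) \<le> Zo n ^ k"
proof (induction k)
  case 0 then show ?case by (simp add: Zo_0)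
next
  case (Suc k)
  have "Zo (Suc k * n) = Zo (n + k * n)" by simp
  also have "\<dots> \<le> Zo n * Zo (k * n)" by (rule Zo_submult)
  also have "\<dots> \<le> Zo n * Zo n ^ k" by (rule mult_left_mono[OF Suc Zo_nonneg])
  finally show ?case by simp
qed

lemma Zo_pos: "0 < Zo n"
  using hh_pos[of n] hh_le_Zf[of n] Zf_le_Zo[of n] by simp

lemma Zo_ge_exp: assumes n: "1 \<le> n" shows "exp (lamH * real n) \<le> Zo n"
proof -
  let ?f = "\<lambda>k. Suc k * n"
  have sm: "strict_mono ?f" using n by (auto simp: strict_mono_def)
  have lim: "((\<lambda>m. ln (hh m) / real m) \<circ> ?f) \<longlonglongrightarrow> lamH"
    by (rule LIMSEQ_subseq_LIMSEQ[OF lamH_lim sm])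
  have le: "((\<lambda>m. ln (hh m) / real m) \<circ> ?f) k \<le> ln (Zo n) / real n" for k
  proof -
    have "hh (Suc k * n) \<le> Zo n ^ Suc k"
      using hh_le_Zf[of "Suc k * n"] Zf_le_Zo[of "Suc k * n"] Zo_pow[of "Suc k" n] by simp
    then have "ln (hh (Suc k * n)) \<le> ln (Zo n ^ Suc k)"
      using hh_pos[of "Suc k * n"] Zo_pos[of n] by (subst ln_le_cancel_iff) (auto simp del: power_Suc)
    also have "\<dots> = real (Suc k) * ln (Zo n)" using Zo_pos by (simp add: ln_realpow del: power_Suc)
    finally have "ln (hh (Suc k * n)) \<le> real (Suc k) * ln (Zo n)" .
    then have "ln (hh (Suc k * n)) / real (Suc k * n) \<le> real (Suc k) * ln (Zo n) / real (Suc k * n)"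
      by (rule divide_right_mono) simp
    also have "\<dots> = ln (Zo n) / real n"
    proof -
      have "real (Suc k * n) = real (Suc k) * real n" by (simp only: of_nat_mult)
      moreover have "real (Suc k) \<noteq> 0" by simp
      ultimately show ?thesis by simp
    qed
    finally show ?thesis by (simp only: o_def)
  qed
  have "lamH \<le> ln (Zo n) / real n"
    by (rule LIMSEQ_le_const2[OF lim]) (use le in auto)
  then have "lamH * real n \<le> ln (Zo n)" using n by (simp add: le_divide_eq)
  then show ?thesis using Zo_pos[of n] by (metis exp_le_cancel_iff exp_ln)
qed

lemma Zf_lim: "(\<lambda>n. ln (Zf n) / real n) \<longlonglongrightarrow> lamH"
proof (rule LIMSEQ_I)
  fix e :: real assume e: "0 < e"
  define z where "z = exp (- lamH - e / 2)"
  have z: "0 < z" by (simp add: z_def)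
  have q: "z * exp lamH < 1" using e by (simp add: z_def exp_add[symmetric])
  obtain C where C: "C > 0" "\<And>N. (\<Sum>n\<in>{..N}. Zo n * z ^ n) \<le> C" using Zo_bounded[OF z q] by blast
  have upper: "ln (Zf n) / real n \<le> ln C / real n + lamH + e / 2" if n: "1 \<le> n" for n
  proof -
    have "Zf n * z ^ n \<le> Zo n * z ^ n" using Zf_le_Zo[of n] z by (simp add: mult_right_mono)
    also have "\<dots> \<le> (\<Sum>m\<in>{..n}. Zo m * z ^ m)"
      by (rule member_le_sum) (use z Zo_nonneg in auto)
    also have "\<dots> \<le> C" by (rule C(2))
    finally have "Zf n * z ^ n \<le> C" .
    moreover have "0 < Zf n" using hh_pos[of n] hh_le_Zf[of n] by simp
    ultimately have "ln (Zf n * z ^ n) \<le> ln C" using z C(1) by (subst ln_le_cancel_iff) auto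
    then have "ln (Zf n) + real n * ln z \<le> ln C" using z \<open>0 < Zf n\<close> by (simp add: ln_mult ln_realpow)
    then have "ln (Zf n) \<le> ln C + real n * (lamH + e / 2)" by (simp add: z_def algebra_simps)
    then have "ln (Zf n) / real n \<le> (ln C + real n * (lamH + e / 2)) / real n"
      using n by (intro divide_right_mono) auto
    also have "\<dots> = ln C / real n + lamH + e / 2" using n by (simp add: field_simps)
    finally show ?thesis .
  qed
  have lower: "ln (hh n) / real n \<le> ln (Zf n) / real n" for n
    using hh_le_Zf[of n] hh_pos[of n] by (intro divide_right_mono) auto
  obtain N1 where N1: "\<forall>n\<ge>N1. norm (ln (hh n) / real n - lamH) < e"
    using LIMSEQ_D[OF lamH_lim e] by blast
  have "(\<lambda>n. ln C / real n) \<longlonglongrightarrow> 0" by (rule lim_const_over_n)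
  from LIMSEQ_D[OF this, of "e / 2"] e obtain N2 where N2: "\<forall>n\<ge>N2. norm (ln C / real n - 0) < e / 2"
    by auto
  show "\<exists>no. \<forall>n\<ge>no. norm (ln (Zf n) / real n - lamH) < e"
  proof (intro exI allI impI)
    fix n assume n: "max 1 (max N1 N2) \<le> n"
    have a: "ln (hh n) / real n - lamH > - e" using N1 n by auto
    have "N2 \<le> n" using n by simp
    then have b0: "norm (ln C / real n - 0) < e / 2" using N2 by blast
    then have "\<bar>ln C / real n\<bar> < e / 2" by (simp only: real_norm_def diff_zero)
    then have b: "ln C / real n < e / 2" using abs_ge_self[of "ln C / real n"] by linarith
    have "ln (Zf n) / real n \<le> ln C / real n + lamH + e / 2" using n by (intro upper) simp
    then have "ln (Zf n) / real n - lamH < e" using b by linarith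
    moreover have "ln (Zf n) / real n - lamH > - e" using a lower[of n] by simp
    ultimately show "norm (ln (Zf n) / real n - lamH) < e" by simp
  qed
qed

lemma lambda0_eq: "lambda0 \<Omega> \<phi> \<rho> = lamH"
  unfolding lambda0_def Zpart_eq using Zf_lim by (rule limI)

lemma partA: assumes "lam > lamH" shows "summable (\<lambda>n. hh n * exp (- lam * real n))"
proof (rule summable_comparison_test')
  show "summable (\<lambda>n. exp (lamH - lam) ^ n)" using assms by (intro summable_geometric) simp
  fix n
  have "norm (hh n * exp (- lam * real n)) = hh n * exp (- lam * real n)" using hh_nonneg by simp
  also have "\<dots> \<le> exp (lamH * real n) * exp (- lam * real n)" by (rule mult_right_mono[OF hh_le_exp]) simp
  also have "\<dots> = exp (lamH - lam) ^ n" by (simp add: exp_add[symmetric] exp_of_nat_mult[symmetric] algebra_simps)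
  finally show "norm (hh n * exp (- lam * real n)) \<le> exp (lamH - lam) ^ n" .
qed

lemma partB: "\<not> summable (\<lambda>n. hh n * exp (- lamH * real n))"
proof
  assume sm: "summable (\<lambda>n. hh n * exp (- lamH * real n))"
  define z where "z = exp (- lamH)"
  have z: "0 < z" by (simp add: z_def)
  have zn: "exp (- lamH * real n) = z ^ n" for n by (simp add: z_def exp_of_nat_mult[symmetric] mult.commute)
  define G where "G = (\<Sum>n. hh n * exp (- lamH * real n))"
  have HsG: "Hs z M \<le> G" for M
  proof -
    have "Hs z M = (\<Sum>n\<in>{..M}. hh n * exp (- lamH * real n))" by (simp only: Hs_def zn)
    also have "\<dots> \<le> G" unfolding G_def by (rule sum_le_suminf[OF sm]) (auto simp: hh_nonneg)
    finally show ?thesis .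
  qed
  obtain c where c: "c > 0" "\<And>z N. 0 < z \<Longrightarrow>
    (\<Sum>n\<in>{..N}. Zo n * z ^ n) \<le> 1 + (1 + z * exp (Hs z (Suc N))) * exp (Hs z (Suc N)) / c"
    using Zo_sum_bound by blast
  define K where "K = 1 + (1 + z * exp G) * exp G / c"
  have bnd: "(\<Sum>n\<in>{..N}. Zo n * z ^ n) \<le> K" for N
  proof -
    have E: "exp (Hs z (Suc N)) \<le> exp G" using HsG by simp
    have "(1 + z * exp (Hs z (Suc N))) * exp (Hs z (Suc N)) \<le> (1 + z * exp G) * exp G"
      by (intro mult_mono add_left_mono mult_left_mono E) (use z in auto)
    then have "1 + (1 + z * exp (Hs z (Suc N))) * exp (Hs z (Suc N)) / c \<le> K"
      unfolding K_def using c(1) by (simp add: divide_right_mono)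
    then show ?thesis using c(2)[OF z, of N] by simp
  qed
  have ge1: "1 \<le> Zo n * z ^ n" if "1 \<le> n" for n
  proof -
    have "exp (lamH * real n) * z ^ n \<le> Zo n * z ^ n"
      by (rule mult_right_mono[OF Zo_ge_exp[OF that]]) (use z in simp)
    moreover have "exp (lamH * real n) * z ^ n = 1"
      by (simp add: zn[symmetric] exp_add[symmetric])
    ultimately show ?thesis by simp
  qed
  define N where "N = nat (ceiling K) + 1"
  have "real N \<le> (\<Sum>n\<in>{1..N}. Zo n * z ^ n)"
  proof -
    have "(\<Sum>n\<in>{1..N}. (1::real)) \<le> (\<Sum>n\<in>{1..N}. Zo n * z ^ n)" by (rule sum_mono) (use ge1 in auto)
    then show ?thesis by simp
  qed
  also have "\<dots> \<le> (\<Sum>n\<in>{..N}. Zo n * z ^ n)"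
    by (rule sum_mono2) (use Zo_nonneg z in auto)
  also have "\<dots> \<le> K" by (rule bnd)
  finally have "real N \<le> K" .
  moreover have "K < real N" unfolding N_def by linarith
  ultimately show False by simp
qed

end

theorem corollary5:
  fixes d :: nat and \<Omega> :: "pt set" and \<phi> :: "nat \<Rightarrow> real" and \<rho> :: "pt \<Rightarrow> real"
  assumes "finite \<Omega>" and "\<Omega> \<subseteq> Zd d - {0}"
    and "\<forall>g\<in>lattice_syms d. g ` \<Omega> \<subseteq> \<Omega>"
    and "\<forall>a. \<phi> a \<ge> 0" and "\<phi> 0 = 0" and "\<phi> 1 = 0"
    and "\<forall>a b. \<phi> (a + b) \<ge> \<phi> a + \<phi> b"
    and "\<forall>v\<in>\<Omega>. \<rho> v \<ge> 0" and "(\<Sum>v\<in>\<Omega>. \<rho> v) = 1"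
    and "\<forall>g\<in>lattice_syms d. \<forall>v\<in>\<Omega>. \<rho> (g v) = \<rho> v"
  shows "(\<forall>lam>lambda0 \<Omega> \<phi> \<rho>. summable (\<lambda>n. Hbridge \<Omega> \<phi> \<rho> n * exp (- lam * real n)))
       \<and> \<not> summable (\<lambda>n. Hbridge \<Omega> \<phi> \<rho> n * exp (- lambda0 \<Omega> \<phi> \<rho> * real n))"
proof -
  interpret W: wsetup d \<Omega> \<phi> \<rho> by (unfold_locales) (use assms in auto)
  show ?thesis unfolding W.lambda0_eq W.Hbridge_eq using W.partA W.partB by blast
qed


end
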